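(* Consider the procedures $\mathrm{Solve}_\mathsf{E}$ and $\mathrm{Solve}_\mathsf{O}$ defined in the context (Algorithm 1). Let $G$ be a subgame, $p_\mathsf{E},p_\mathsf{O}$ positive integers, and $d$ a nonnegative integer not smaller than the maximal priority in $G$. If $d$ is even, the set returned by $\mathrm{Solve}_\mathsf{E}(G,d,p_\mathsf{E},p_\mathsf{O})$ (i) is $\mathsf{E}$-closed in $G$; (ii) contains every dominion of Even in $G$ of size at most $p_\mathsf{E}$; and (iii) is disjoint from every dominion of Odd in $G$ of size at most $p_\mathsf{O}$. If $d$ is odd, the set returned by $\mathrm{Solve}_\mathsf{O}(G,d,p_\mathsf{O},p_\mathsf{E})$ (i) is $\mathsf{O}$-closed in $G$; (ii) contains every dominion of Odd in $G$ of size at most $p_\mathsf{O}$; and (iii) is disjoint from every dominion of Even in $G$ of size at most $p_\mathsf{E}$.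
   Context: A parity game is $\mathcal{G}=(V,V_\mathsf{E},E,\pi)$: $(V,E)$ a finite directed graph without self-loops, every vertex having a successor; $\pi\colon V\to\{1,\dots,d\}$ positive priorities; $V_\mathsf{E}$ Even's vertices, $V_\mathsf{O}=V\setminus V_\mathsf{E}$ Odd's vertices. A play is won by Even iff the highest priority seen infinitely often is even, else by Odd. A subgame is given by $G\subseteq V$ in which every vertex has a successor in $G$ (restrict $\mathcal{G}$ to $G$). A dominion of player $\wp$ in $G$ is $D\subseteq G$ such that from every $v\in D$, $\wp$ has a winning strategy in $G$ agreeing only with plays staying forever in $D$. $\mathrm{Attr}_\wp(S,G)$ is the set of vertices from which $\wp$ has a strategy in $G$ agreeing only with plays reaching $S$. $S\subseteq G$ is $\wp$-closed in $G$ if $\mathrm{Attr}_{\bar\wp}(G\setminus S,G)=G\setminus S$ ($\bar\wp$ the opponent of $\wp$). Algorithm 1. $\mathrm{Solve}_\mathsf{E}(G,d,p_\mathsf{E},p_\mathsf{O})$ (for even $d$): if $G=\emptyset$ or $p_\mathsf{O}\le 1$, return $G$. Otherwise: $G_1:=\mathrm{Solve}_\mathsf{E}(G,d,p_\mathsf{E},\lfloor p_\mathsf{O}/2\rfloor)$; $N_d:=\{v\in G_1:\pi(v)=d\}$; $H:=G_1\setminus\mathrm{Attr}_\mathsf{E}(N_d,G_1)$; $W_\mathsf{O}:=\mathrm{Solve}_\mathsf{O}(H,d-1,p_\mathsf{O},p_\mathsf{E})$; $G_2:=G_1\setminus\mathrm{Attr}_\mathsf{O}(W_\mathsf{O},G_1)$;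 $G_3:=\mathrm{Solve}_\mathsf{E}(G_2,d,p_\mathsf{E},\lfloor p_\mathsf{O}/2\rfloor)$; return $G_3$. $\mathrm{Solve}_\mathsf{O}(G,d,p_\mathsf{O},p_\mathsf{E})$ (for odd $d$) is the dual: if $G=\emptyset$ or $p_\mathsf{E}\le 1$, return $G$. Otherwise: $G_1:=\mathrm{Solve}_\mathsf{O}(G,d,p_\mathsf{O},\lfloor p_\mathsf{E}/2\rfloor)$; $N_d:=\{v\in G_1:\pi(v)=d\}$; $H:=G_1\setminus\mathrm{Attr}_\mathsf{O}(N_d,G_1)$; $W_\mathsf{E}:=\mathrm{Solve}_\mathsf{E}(H,d-1,p_\mathsf{E},p_\mathsf{O})$; $G_2:=G_1\setminus\mathrm{Attr}_\mathsf{E}(W_\mathsf{E},G_1)$; $G_3:=\mathrm{Solve}_\mathsf{O}(G_2,d,p_\mathsf{O},\lfloor p_\mathsf{E}/2\rfloor)$; return $G_3$. *)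

theory Defs
  imports Main
begin

datatype player = Even | Odd

fun opp :: "player \<Rightarrow> player" where
  "opp Even = Odd" | "opp Odd = Even"

record 'v pgame =
  verts :: "'v set"
  evens :: "'v set"
  edges :: "('v \<times> 'v) set"
  prio  :: "'v \<Rightarrow> nat"

definition parity_game :: "'v pgame \<Rightarrow> bool" where
  "parity_game g \<longleftrightarrow>
     finite (verts g) \<and> evens g \<subseteq> verts g \<and> edges g \<subseteq> verts g \<times> verts g \<and>
     (\<forall>v. (v, v) \<notin> edges g) \<and>
     (\<forall>v\<in>verts g. \<exists>w. (v, w) \<in> edges g) \<and>
     (\<forall>v\<in>verts g. 1 \<le> prio g v)"

definition owns :: "'v pgame \<Rightarrow> player \<Rightarrow> 'v \<Rightarrow> bool" where
  "owns g P v \<longleftrightarrow> v \<in> verts g \<and> (if P = Even then v \<in> evens g else v \<notin> evens g)"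

definition subgame :: "'v pgame \<Rightarrow> 'v set \<Rightarrow> bool" where
  "subgame g G \<longleftrightarrow> G \<subseteq> verts g \<and> (\<forall>v\<in>G. \<exists>w\<in>G. (v, w) \<in> edges g)"

definition strategy :: "'v pgame \<Rightarrow> player \<Rightarrow> 'v set \<Rightarrow> ('v list \<Rightarrow> 'v) \<Rightarrow> bool" where
  "strategy g P G \<sigma> \<longleftrightarrow>
     (\<forall>h. h \<noteq> [] \<and> set h \<subseteq> G \<and> owns g P (last h) \<and> (\<exists>w\<in>G. (last h, w) \<in> edges g)
          \<longrightarrow> \<sigma> h \<in> G \<and> (last h, \<sigma> h) \<in> edges g)"

definition play :: "'v pgame \<Rightarrow> 'v set \<Rightarrow> 'v \<Rightarrow> (nat \<Rightarrow> 'v) \<Rightarrow> bool" where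
  "play g G v \<rho> \<longleftrightarrow> \<rho> 0 = v \<and> (\<forall>i. \<rho> i \<in> G \<and> (\<rho> i, \<rho> (Suc i)) \<in> edges g)"

definition consistent :: "'v pgame \<Rightarrow> player \<Rightarrow> ('v list \<Rightarrow> 'v) \<Rightarrow> (nat \<Rightarrow> 'v) \<Rightarrow> bool" where
  "consistent g P \<sigma> \<rho> \<longleftrightarrow> (\<forall>i. owns g P (\<rho> i) \<longrightarrow> \<rho> (Suc i) = \<sigma> (map \<rho> [0..<Suc i]))"

definition inf_max_prio :: "'v pgame \<Rightarrow> (nat \<Rightarrow> 'v) \<Rightarrow> nat" where
  "inf_max_prio g \<rho> = Max {prio g v | v. infinite {i. \<rho> i = v}}"

definition wins :: "'v pgame \<Rightarrow> player \<Rightarrow> (nat \<Rightarrow> 'v) \<Rightarrow> bool" where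
  "wins g P \<rho> \<longleftrightarrow> (if P = Even then even (inf_max_prio g \<rho>) else odd (inf_max_prio g \<rho>))"

definition dominion :: "'v pgame \<Rightarrow> player \<Rightarrow> 'v set \<Rightarrow> 'v set \<Rightarrow> bool" where
  "dominion g P D G \<longleftrightarrow> D \<subseteq> G \<and>
     (\<forall>v\<in>D. \<exists>\<sigma>. strategy g P G \<sigma> \<and>
        (\<forall>\<rho>. play g G v \<rho> \<and> consistent g P \<sigma> \<rho> \<longrightarrow> (\<forall>i. \<rho> i \<in> D) \<and> wins g P \<rho>))"

definition attr :: "'v pgame \<Rightarrow> player \<Rightarrow> 'v set \<Rightarrow> 'v set \<Rightarrow> 'v set" where
  "attr g P S G = {v \<in> G. \<exists>\<sigma>. strategy g P G \<sigma> \<and>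
     (\<forall>\<rho>. play g G v \<rho> \<and> consistent g P \<sigma> \<rho> \<longrightarrow> (\<exists>i. \<rho> i \<in> S))}"

definition closed :: "'v pgame \<Rightarrow> player \<Rightarrow> 'v set \<Rightarrow> 'v set \<Rightarrow> bool" where
  "closed g P S G \<longleftrightarrow> attr g (opp P) (G - S) G = G - S"

text \<open>The extra guard d = 0
  only makes the function total; under the hypothesis that all priorities in G are
  positive and at most d, d = 0 forces G = {} anyway.\<close>
fun solve :: "'v pgame \<Rightarrow> player \<Rightarrow> 'v set \<Rightarrow> nat \<Rightarrow> nat \<Rightarrow> nat \<Rightarrow> 'v set" where
  "solve g P G d pme pop =
    (if G = {} \<or> pop \<le> 1 \<or> d = 0 then G
     else
       (let G1 = solve g P G d pme (pop div 2);
            Nd = {v \<in> G1. prio g v = d};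
            H  = G1 - attr g P Nd G1;
            W  = solve g (opp P) H (d - 1) pop pme;
            G2 = G1 - attr g (opp P) W G1
        in solve g P G2 d pme (pop div 2)))"

definition Solve_E :: "'v pgame \<Rightarrow> 'v set \<Rightarrow> nat \<Rightarrow> nat \<Rightarrow> nat \<Rightarrow> 'v set" where
  "Solve_E g G d pE pO = solve g Even G d pE pO"

definition Solve_O :: "'v pgame \<Rightarrow> 'v set \<Rightarrow> nat \<Rightarrow> nat \<Rightarrow> nat \<Rightarrow> 'v set" where
  "Solve_O g G d pO pE = solve g Odd G d pO pE"

end

theory Submission
  imports Defs
begin

lemma owns_opp: "v \<in> verts g \<Longrightarrow> owns g (opp P) v \<longleftrightarrow> \<not> owns g P v"
  by (cases P) (auto simp: owns_def)
lemma opp_opp[simp]: "opp (opp P) = P" by (cases P) auto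
lemma owns_verts: "owns g P v \<Longrightarrow> v \<in> verts g" by (simp add: owns_def)

definition fixs :: "'v pgame \<Rightarrow> 'v set \<Rightarrow> ('v list \<Rightarrow> 'v) \<Rightarrow> 'v list \<Rightarrow> 'v" where
  "fixs g K \<sigma> h = (if \<sigma> h \<in> K \<and> (last h, \<sigma> h) \<in> edges g then \<sigma> h
      else (SOME w. w \<in> K \<and> (last h, w) \<in> edges g))"

lemma strategy_fixs: "strategy g P K (fixs g K \<sigma>)"
  unfolding strategy_def
proof (intro allI impI)
  fix h assume "h \<noteq> [] \<and> set h \<subseteq> K \<and> owns g P (last h) \<and> (\<exists>w\<in>K. (last h, w) \<in> edges g)"
  then obtain w where "w \<in> K \<and> (last h, w) \<in> edges g" by auto
  then have "(SOME w. w \<in> K \<and> (last h, w) \<in> edges g) \<in> K \<and> (last h, SOME w. w \<in> K \<and> (last h, w) \<in> edges g) \<in> edges g"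
    by (rule someI)
  then show "fixs g K \<sigma> h \<in> K \<and> (last h, fixs g K \<sigma> h) \<in> edges g"
    unfolding fixs_def by auto
qed

lemma fixs_eq: "\<sigma> h \<in> K \<Longrightarrow> (last h, \<sigma> h) \<in> edges g \<Longrightarrow> fixs g K \<sigma> h = \<sigma> h"
  by (simp add: fixs_def)

fun pref :: "('v list \<Rightarrow> 'v) \<Rightarrow> 'v \<Rightarrow> nat \<Rightarrow> 'v list" where
  "pref f v 0 = [v]" | "pref f v (Suc n) = pref f v n @ [f (pref f v n)]"

definition run :: "('v list \<Rightarrow> 'v) \<Rightarrow> 'v \<Rightarrow> nat \<Rightarrow> 'v" where
  "run f v i = pref f v i ! i"

lemma length_pref[simp]: "length (pref f v n) = Suc n"
  by (induction n) auto

lemma pref_nth: "i \<le> n \<Longrightarrow> pref f v n ! i = run f v i"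
proof (induction n)
  case 0 then show ?case by (simp add: run_def)
next
  case (Suc n)
  show ?case
  proof (cases "i = Suc n")
    case True then show ?thesis by (simp add: run_def)
  next
    case False
    then have "i \<le> n" using Suc.prems by simp
    then show ?thesis using Suc.IH by (simp add: nth_append)
  qed
qed

lemma map_run: "map (run f v) [0..<Suc n] = pref f v n"
  by (rule nth_equalityI) (auto simp: pref_nth simp del: upt_Suc)

lemma run_0[simp]: "run f v 0 = v" by (simp add: run_def)

lemma run_Suc: "run f v (Suc i) = f (map (run f v) [0..<Suc i])"
  by (simp add: run_def map_run nth_append del: upt_Suc)

definition cpath :: "'v pgame \<Rightarrow> 'v set \<Rightarrow> player \<Rightarrow> ('v list \<Rightarrow> 'v) \<Rightarrow> 'v list \<Rightarrow> bool" where
  "cpath g K Pl \<sigma> h \<longleftrightarrow> h \<noteq> [] \<and> set h \<subseteq> K \<and>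
     (\<forall>j. Suc j < length h \<longrightarrow> (h!j, h!Suc j) \<in> edges g \<and>
        (owns g Pl (h!j) \<longrightarrow> h!Suc j = \<sigma> (take (Suc j) h)))"

lemma cpath_single: "v \<in> K \<Longrightarrow> cpath g K Pl \<sigma> [v]"
  by (simp add: cpath_def)

lemma cpath_snoc:
  assumes "cpath g K Pl \<sigma> h" "w \<in> K" "(last h, w) \<in> edges g" "owns g Pl (last h) \<longrightarrow> w = \<sigma> h"
  shows "cpath g K Pl \<sigma> (h @ [w])"
  unfolding cpath_def
proof (intro conjI allI impI)
  show "h @ [w] \<noteq> []" by simp
  show "set (h @ [w]) \<subseteq> K" using assms(1,2) by (auto simp: cpath_def)
next
  fix j assume j: "Suc j < length (h @ [w])"
  show "((h @ [w]) ! j, (h @ [w]) ! Suc j) \<in> edges g"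
  proof (cases "Suc j < length h")
    case True then show ?thesis using assms(1) j by (auto simp: cpath_def nth_append)
  next
    case False
    then have "Suc j = length h" using j by simp
    moreover have "h \<noteq> []" using assms(1) by (simp add: cpath_def)
    moreover have "j = length h - 1" using \<open>Suc j = length h\<close> by simp
    ultimately show ?thesis using assms(3) by (simp add: nth_append last_conv_nth)
  qed
next
  fix j assume j: "Suc j < length (h @ [w])" and o: "owns g Pl ((h @ [w]) ! j)"
  show "(h @ [w]) ! Suc j = \<sigma> (take (Suc j) (h @ [w]))"
  proof (cases "Suc j < length h")
    case True then show ?thesis using assms(1) j o by (auto simp: cpath_def nth_append)
  next
    case False
    then have "Suc j = length h" using j by simp
    moreover have "h \<noteq> []" using assms(1) by (simp add: cpath_def)
    moreover have "j = length h - 1" using \<open>Suc j = length h\<close> by simp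
    ultimately show ?thesis using assms(4) o by (simp add: nth_append last_conv_nth)
  qed
qed

lemma cpath_take:
  assumes "cpath g K Pl \<sigma> h" "0 < n"
  shows "cpath g K Pl \<sigma> (take n h)"
  using assms unfolding cpath_def
  by (auto simp: take_Suc_conv_app_nth min_def dest: in_set_takeD)

lemma cpath_nonempty: "cpath g K Pl \<sigma> h \<Longrightarrow> h \<noteq> []"
  by (simp add: cpath_def)

lemma map_upt_nth: "j \<le> n \<Longrightarrow> map \<rho> [0..<Suc n] ! j = \<rho> j"
  by (simp del: upt_Suc)

lemma take_map_upt: "j \<le> n \<Longrightarrow> take (Suc j) (map \<rho> [0..<Suc n]) = map \<rho> [0..<Suc j]"
  by (simp add: take_map min_def del: upt_Suc)

lemma play_cpath:
  assumes "play g K v \<rho>" "consistent g Pl \<sigma> \<rho>"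
  shows "cpath g K Pl \<sigma> (map \<rho> [0..<Suc n])"
  using assms unfolding cpath_def play_def consistent_def
  by (auto simp: take_map_upt map_upt_nth simp del: upt_Suc)

lemma cpath_play:
  assumes "\<And>n. cpath g K Pl \<sigma> (map \<rho> [0..<Suc n])"
  shows "play g K (\<rho> 0) \<rho> \<and> consistent g Pl \<sigma> \<rho>"
proof -
  have "\<rho> i \<in> K \<and> (\<rho> i, \<rho> (Suc i)) \<in> edges g \<and>
        (owns g Pl (\<rho> i) \<longrightarrow> \<rho> (Suc i) = \<sigma> (map \<rho> [0..<Suc i]))" for i
  proof -
    have c: "cpath g K Pl \<sigma> (map \<rho> [0..<Suc (Suc i)])" by (rule assms)
    then show ?thesis unfolding cpath_def
      apply (elim conjE)
      apply (drule spec[of _ i])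
      apply (auto simp: take_map_upt map_upt_nth simp del: upt_Suc)
      done
  qed
  then show ?thesis unfolding play_def consistent_def by auto
qed

lemma last_map_upt[simp]: "last (map \<rho> [0..<Suc i]) = \<rho> i"
  by simp

lemma take_eq_map:
  assumes "\<forall>j\<le>i. \<rho> j = h!j" "i < length h"
  shows "take (Suc i) h = map \<rho> [0..<Suc i]"
  by (rule nth_equalityI) (use assms in \<open>auto simp del: upt_Suc\<close>)

lemma subgame_succ: "subgame g K \<Longrightarrow> v \<in> K \<Longrightarrow> \<exists>w\<in>K. (v, w) \<in> edges g"
  by (simp add: subgame_def)

lemma strat_app:
  assumes "strategy g Pl K \<sigma>" "h \<noteq> []" "set h \<subseteq> K" "owns g Pl (last h)" "w \<in> K" "(last h, w) \<in> edges g"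
  shows "\<sigma> h \<in> K \<and> (last h, \<sigma> h) \<in> edges g"
  using assms unfolding strategy_def by blast

lemma ext_play:
  assumes sg: "subgame g K" and st: "strategy g Pl K \<sigma>" and c: "cpath g K Pl \<sigma> h"
  shows "\<exists>\<rho>. play g K (hd h) \<rho> \<and> consistent g Pl \<sigma> \<rho> \<and> (\<forall>j<length h. \<rho> j = h!j)"
proof -
  define f where "f h' = (if length h' < length h then h ! length h'
      else if owns g Pl (last h') then \<sigma> h' else (SOME w. w \<in> K \<and> (last h', w) \<in> edges g))" for h'
  define \<rho> where "\<rho> = run f (hd h)"
  have ne: "h \<noteq> []" using c by (simp add: cpath_def)
  have hK: "set h \<subseteq> K" using c by (simp add: cpath_def)
  have A: "j < length h \<Longrightarrow> \<rho> j = h!j" for j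
  proof (induction j)
    case 0 then show ?case using ne by (simp add: \<rho>_def hd_conv_nth)
  next
    case (Suc j) then show ?case by (simp add: \<rho>_def run_Suc f_def del: upt_Suc)
  qed
  have rS: "\<rho> (Suc i) = f (map \<rho> [0..<Suc i])" for i
    by (simp add: \<rho>_def run_Suc del: upt_Suc)
  have B: "\<forall>j\<le>i. \<rho> j \<in> K" for i
  proof (induction i)
    case 0 then show ?case using A[of 0] ne hK by auto
  next
    case (Suc i)
    have "\<rho> (Suc i) \<in> K"
    proof (cases "Suc i < length h")
      case True then show ?thesis using A[of "Suc i"] hK by auto
    next
      case False
      have pK: "set (map \<rho> [0..<Suc i]) \<subseteq> K" using Suc.IH by (auto simp del: upt_Suc)
      obtain w where w: "w \<in> K" "(\<rho> i, w) \<in> edges g" using subgame_succ[OF sg] Suc.IH by blast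
      show ?thesis
      proof (cases "owns g Pl (\<rho> i)")
        case True
        have "\<sigma> (map \<rho> [0..<Suc i]) \<in> K"
          using strat_app[OF st _ pK, of w] True w by (simp del: upt_Suc)
        then show ?thesis using True False unfolding rS f_def
          by (auto simp del: upt_Suc)
      next
        case False': False
        have "(SOME w. w \<in> K \<and> (\<rho> i, w) \<in> edges g) \<in> K" using w by (metis (mono_tags, lifting) someI)
        then show ?thesis using False False' unfolding rS f_def by (auto simp del: upt_Suc)
      qed
    qed
    then show ?case using Suc.IH le_Suc_eq by auto
  qed
  have C: "(\<rho> i, \<rho> (Suc i)) \<in> edges g \<and> (owns g Pl (\<rho> i) \<longrightarrow> \<rho> (Suc i) = \<sigma> (map \<rho> [0..<Suc i]))" for i
  proof (cases "Suc i < length h")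
    case True
    have "\<forall>j\<le>i. \<rho> j = h!j" using A True by auto
    then have tk: "take (Suc i) h = map \<rho> [0..<Suc i]" using True by (intro take_eq_map) auto
    show ?thesis using c True A[of i] A[of "Suc i"] tk unfolding cpath_def by auto
  next
    case False
    have pK: "set (map \<rho> [0..<Suc i]) \<subseteq> K" using B[of i] by (auto simp del: upt_Suc)
    obtain w where w: "w \<in> K" "(\<rho> i, w) \<in> edges g" using subgame_succ[OF sg] B[of i] by blast
    show ?thesis
    proof (cases "owns g Pl (\<rho> i)")
      case True
      have "(\<rho> i, \<sigma> (map \<rho> [0..<Suc i])) \<in> edges g"
        using strat_app[OF st _ pK, of w] True w by (simp del: upt_Suc)
      then show ?thesis using True False unfolding rS f_def
        by (auto simp del: upt_Suc)
    next
      case False': False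
      have "(\<rho> i, SOME w. w \<in> K \<and> (\<rho> i, w) \<in> edges g) \<in> edges g" using w by (metis (mono_tags, lifting) someI)
      then show ?thesis using False False' unfolding rS f_def by (auto simp del: upt_Suc)
    qed
  qed
  have "play g K (hd h) \<rho>" unfolding play_def using B C by (auto simp: \<rho>_def)
  moreover have "consistent g Pl \<sigma> \<rho>" unfolding consistent_def using C by auto
  ultimately show ?thesis using A by blast
qed

lemma dom_path:
  assumes sg: "subgame g K" and st: "strategy g Pl K \<sigma>"
    and win: "\<forall>\<rho>. play g K v \<rho> \<and> consistent g Pl \<sigma> \<rho> \<longrightarrow> (\<forall>i. \<rho> i \<in> Z)"
    and c: "cpath g K Pl \<sigma> h" and hd: "hd h = v"
  shows "set h \<subseteq> Z"
proof
  fix x assume "x \<in> set h"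
  then obtain j where j: "j < length h" "x = h!j" by (auto simp: in_set_conv_nth)
  obtain \<rho> where "play g K (hd h) \<rho> \<and> consistent g Pl \<sigma> \<rho> \<and> (\<forall>j<length h. \<rho> j = h!j)"
    using ext_play[OF sg st c] by blast
  then show "x \<in> Z" using win hd j by metis
qed

definition ptrap :: "'v pgame \<Rightarrow> player \<Rightarrow> 'v set \<Rightarrow> 'v set \<Rightarrow> bool" where
  "ptrap g P T K \<longleftrightarrow> T \<subseteq> K \<and> (\<forall>v\<in>T. (owns g P v \<longrightarrow> (\<exists>w\<in>T. (v, w) \<in> edges g)) \<and>
      (\<not> owns g P v \<longrightarrow> (\<forall>w\<in>K. (v, w) \<in> edges g \<longrightarrow> w \<in> T)))"

lemma dom_ptrap:
  assumes sg: "subgame g K" and d: "dominion g Pl Z K"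
  shows "ptrap g Pl Z K"
  unfolding ptrap_def
proof (intro conjI ballI impI)
  show "Z \<subseteq> K" using d by (simp add: dominion_def)
next
  fix v assume v: "v \<in> Z"
  then obtain \<sigma> where st: "strategy g Pl K \<sigma>" and
    win: "\<forall>\<rho>. play g K v \<rho> \<and> consistent g Pl \<sigma> \<rho> \<longrightarrow> (\<forall>i. \<rho> i \<in> Z) \<and> wins g Pl \<rho>"
    using d by (auto simp: dominion_def)
  have vK: "v \<in> K" using d v by (auto simp: dominion_def)
  have win': "\<forall>\<rho>. play g K v \<rho> \<and> consistent g Pl \<sigma> \<rho> \<longrightarrow> (\<forall>i. \<rho> i \<in> Z)" using win by blast
  {
    assume o: "owns g Pl v"
    obtain w where w: "w \<in> K" "(v, w) \<in> edges g" using subgame_succ[OF sg vK] by blast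
    have "\<sigma> [v] \<in> K \<and> (last [v], \<sigma> [v]) \<in> edges g"
      by (rule strat_app[OF st, of _ w]) (use o w vK in auto)
    then have s: "\<sigma> [v] \<in> K \<and> (v, \<sigma> [v]) \<in> edges g" by simp
    have "cpath g K Pl \<sigma> ([v] @ [\<sigma> [v]])"
      by (rule cpath_snoc) (use s vK in \<open>auto intro: cpath_single\<close>)
    then have "set ([v] @ [\<sigma> [v]]) \<subseteq> Z" by (rule dom_path[OF sg st win']) simp
    then show "\<exists>w\<in>Z. (v, w) \<in> edges g" using s by auto
  next
    assume o: "\<not> owns g Pl v"
    fix w assume w: "w \<in> K" "(v, w) \<in> edges g"
    have "cpath g K Pl \<sigma> ([v] @ [w])"
      by (rule cpath_snoc) (use w vK o in \<open>auto intro: cpath_single\<close>)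
    then have "set ([v] @ [w]) \<subseteq> Z" by (rule dom_path[OF sg st win']) simp
    then show "w \<in> Z" by simp
  }
qed

lemma infinite_nat_iff_unbounded: "infinite (S::nat set) \<longleftrightarrow> (\<forall>m. \<exists>n>m. n \<in> S)"
proof
  assume inf: "infinite S"
  show "\<forall>m. \<exists>n>m. n \<in> S"
  proof (rule ccontr)
    assume "\<not> (\<forall>m. \<exists>n>m. n \<in> S)"
    then obtain m where m: "\<forall>n>m. n \<notin> S" by auto
    have "S \<subseteq> {..m}"
    proof
      fix x assume "x \<in> S" then show "x \<in> {..m}" using m by (auto simp: not_less[symmetric])
    qed
    then show False using inf finite_subset by blast
  qed
next
  assume a: "\<forall>m. \<exists>n>m. n \<in> S"
  show "infinite S"
  proof
    assume "finite S"
    then obtain m where m: "\<forall>n\<in>S. n < m" using finite_nat_set_iff_bounded by auto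
    obtain n where "n > m" "n \<in> S" using a by auto
    then show False using m by auto
  qed
qed

lemma infinite_shift: "infinite {i. P (i + k)} \<longleftrightarrow> infinite {i::nat. P i}"
proof
  assume a: "infinite {i. P (i + k)}"
  show "infinite {i. P i}" unfolding infinite_nat_iff_unbounded
  proof
    fix m obtain n where "n > m" "P (n + k)" using a unfolding infinite_nat_iff_unbounded by blast
    then show "\<exists>n>m. n \<in> {i. P i}" by (intro exI[of _ "n + k"]) auto
  qed
next
  assume a: "infinite {i. P i}"
  show "infinite {i. P (i + k)}" unfolding infinite_nat_iff_unbounded
  proof
    fix m obtain n where "n > m + k" "P n" using a unfolding infinite_nat_iff_unbounded by blast
    then show "\<exists>n>m. n \<in> {i. P (i + k)}" by (intro exI[of _ "n - k"]) auto
  qed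
qed

lemma imp_shift: "inf_max_prio g (\<lambda>i. \<rho> (i + k)) = inf_max_prio g \<rho>"
  unfolding inf_max_prio_def using infinite_shift[of "\<lambda>i. \<rho> i = _" k] by simp

lemma wins_shift: "wins g P (\<lambda>i. \<rho> (i + k)) = wins g P \<rho>"
  unfolding wins_def imp_shift ..

lemma fixs_valid:
  assumes "strategy g Pl K \<tau>" "h \<noteq> []" "set h \<subseteq> K" "owns g Pl (last h)" "w \<in> K" "(last h, w) \<in> edges g"
  shows "fixs g K \<tau> h = \<tau> h"
  using strat_app[OF assms] by (intro fixs_eq) auto

lemma fixs_cong2: "\<sigma> h = \<tau> h' \<Longrightarrow> last h = last h' \<Longrightarrow> fixs g K \<sigma> h = fixs g K \<tau> h'"
  by (simp add: fixs_def)

lemma map_upt_shift: "k \<le> i \<Longrightarrow> drop k (map \<rho> [0..<Suc i]) = map (\<lambda>j. \<rho> (j + k)) [0..<Suc (i - k)]"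
  by (rule nth_equalityI) (auto simp: add.commute simp del: upt_Suc)

lemma tl_map_upt: "tl (map \<rho> [0..<Suc (Suc i)]) = map (\<lambda>j. \<rho> (Suc j)) [0..<Suc i]"
  by (rule nth_equalityI) (auto simp: nth_tl simp del: upt_Suc)

lemma hd_map_upt[simp]: "hd (map \<rho> [0..<Suc i]) = \<rho> 0"
  by (simp add: hd_map del: upt_Suc)

lemma tre:
  assumes sgK: "subgame g K" and dom: "dominion g Pl Z K"
    and c1: "\<forall>u\<in>Z\<inter>K'. owns g Pl u \<longrightarrow> (\<forall>w\<in>Z. (u,w)\<in>edges g \<longrightarrow> w\<in>K')"
    and c2: "\<forall>u\<in>Z\<inter>K'. \<not> owns g Pl u \<longrightarrow> (\<forall>w\<in>K'. (u,w)\<in>edges g \<longrightarrow> w\<in>K \<or> w\<in>E)"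
    and u: "u \<in> Z \<inter> K'"
  shows "\<exists>\<sigma>'. strategy g Pl K' \<sigma>' \<and> (\<forall>\<rho>. play g K' u \<rho> \<and> consistent g Pl \<sigma>' \<rho> \<longrightarrow>
        ((\<forall>i. \<rho> i \<in> Z \<inter> K') \<and> wins g Pl \<rho>) \<or> (\<exists>k. \<rho> k \<in> E \<and> (\<forall>i<k. \<rho> i \<in> Z \<inter> K')))"
proof -
  obtain \<sigma> where st: "strategy g Pl K \<sigma>" and
    win: "\<forall>\<rho>. play g K u \<rho> \<and> consistent g Pl \<sigma> \<rho> \<longrightarrow> (\<forall>i. \<rho> i \<in> Z) \<and> wins g Pl \<rho>"
    using dom u by (auto simp: dominion_def)
  have win': "\<forall>\<rho>. play g K u \<rho> \<and> consistent g Pl \<sigma> \<rho> \<longrightarrow> (\<forall>i. \<rho> i \<in> Z)" using win by blast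
  have ZK: "Z \<subseteq> K" using dom by (simp add: dominion_def)
  show ?thesis
  proof (intro exI[of _ "fixs g K' \<sigma>"] conjI allI impI)
    show "strategy g Pl K' (fixs g K' \<sigma>)" by (rule strategy_fixs)
    fix \<rho> assume pc: "play g K' u \<rho> \<and> consistent g Pl (fixs g K' \<sigma>) \<rho>"
    have r0: "\<rho> 0 = u" using pc by (simp add: play_def)
    have edge: "(\<rho> i, \<rho> (Suc i)) \<in> edges g" "\<rho> i \<in> K'" for i using pc by (auto simp: play_def)
    have cons: "owns g Pl (\<rho> i) \<Longrightarrow> \<rho> (Suc i) = fixs g K' \<sigma> (map \<rho> [0..<Suc i])" for i
      using pc by (simp add: consistent_def)
    have step: "(\<rho> (Suc i) \<in> Z \<inter> K' \<and> cpath g K Pl \<sigma> (map \<rho> [0..<Suc (Suc i)])) \<or>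
                (\<rho> (Suc i) \<in> E \<and> \<rho> (Suc i) \<notin> Z)"
      if cp: "cpath g K Pl \<sigma> (map \<rho> [0..<Suc i])" and ri: "\<rho> i \<in> Z \<inter> K'" for i
    proof -
      let ?p = "map \<rho> [0..<Suc i]"
      show ?thesis
      proof (cases "owns g Pl (\<rho> i)")
        case True
        obtain w where w: "w \<in> K" "(\<rho> i, w) \<in> edges g" using subgame_succ[OF sgK] ri ZK by blast
        have "\<sigma> ?p \<in> K \<and> (last ?p, \<sigma> ?p) \<in> edges g"
          by (rule strat_app[OF st, of _ w]) (use cp True w in \<open>auto simp: cpath_def simp del: upt_Suc\<close>)
        then have s: "\<sigma> ?p \<in> K" "(\<rho> i, \<sigma> ?p) \<in> edges g" by auto
        have cp2: "cpath g K Pl \<sigma> (?p @ [\<sigma> ?p])" by (rule cpath_snoc[OF cp]) (use s in auto)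
        have "set (?p @ [\<sigma> ?p]) \<subseteq> Z" by (rule dom_path[OF sgK st win' cp2]) (simp add: r0 del: upt_Suc)
        then have sz: "\<sigma> ?p \<in> Z" by simp
        then have "\<sigma> ?p \<in> K'" using c1 ri True s by blast
        then have eq: "\<rho> (Suc i) = \<sigma> ?p" using cons[OF True] fixs_eq[of \<sigma> ?p K' g] s by simp
        have m: "map \<rho> [0..<Suc (Suc i)] = ?p @ [\<sigma> ?p]" using eq by simp
        have "\<rho> (Suc i) \<in> Z \<inter> K'" using sz eq edge(2)[of "Suc i"] by simp
        then show ?thesis using cp2 m by simp
      next
        case False
        have "\<rho> (Suc i) \<in> K \<or> \<rho> (Suc i) \<in> E" using c2 ri False edge by blast
        then show ?thesis
        proof
          assume k: "\<rho> (Suc i) \<in> K"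
          have cp2: "cpath g K Pl \<sigma> (?p @ [\<rho> (Suc i)])" by (rule cpath_snoc[OF cp]) (use k edge False in auto)
          have "set (?p @ [\<rho> (Suc i)]) \<subseteq> Z" by (rule dom_path[OF sgK st win' cp2]) (simp add: r0 del: upt_Suc)
          then show ?thesis using cp2 edge by auto
        next
          assume e: "\<rho> (Suc i) \<in> E"
          show ?thesis
          proof (cases "\<rho> (Suc i) \<in> Z")
            case True
            then have k: "\<rho> (Suc i) \<in> K" using ZK by auto
            have cp2: "cpath g K Pl \<sigma> (?p @ [\<rho> (Suc i)])" by (rule cpath_snoc[OF cp]) (use k edge False in auto)
            then show ?thesis using True edge by auto
          qed (use e in auto)
        qed
      qed
    qed
    have all: "(\<forall>j\<le>i. \<rho> j \<in> Z \<inter> K') \<Longrightarrow> cpath g K Pl \<sigma> (map \<rho> [0..<Suc i])" for i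
    proof (induction i)
      case 0 then show ?case using ZK by (auto intro: cpath_single)
    next
      case (Suc i)
      then have "cpath g K Pl \<sigma> (map \<rho> [0..<Suc i])" by auto
      from step[OF this] Suc.prems show ?case by auto
    qed
    show "((\<forall>i. \<rho> i \<in> Z \<inter> K') \<and> wins g Pl \<rho>) \<or> (\<exists>k. \<rho> k \<in> E \<and> (\<forall>i<k. \<rho> i \<in> Z \<inter> K'))"
    proof (cases "\<forall>i. \<rho> i \<in> Z \<inter> K'")
      case True
      then have "play g K (\<rho> 0) \<rho> \<and> consistent g Pl \<sigma> \<rho>" using all by (intro cpath_play) auto
      then show ?thesis using win r0 True by auto
    next
      case False
      define k where "k = (LEAST i. \<rho> i \<notin> Z \<inter> K')"
      have k1: "\<rho> k \<notin> Z \<inter> K'" using False unfolding k_def by (metis (mono_tags, lifting) LeastI)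
      have k2: "i < k \<Longrightarrow> \<rho> i \<in> Z \<inter> K'" for i unfolding k_def using not_less_Least by blast
      have "k \<noteq> 0" proof assume "k = 0" then show False using k1 r0 u by simp qed
      then obtain k' where kk: "k = Suc k'" using not0_implies_Suc by blast
      have "\<forall>j\<le>k'. \<rho> j \<in> Z \<inter> K'" using k2 kk by auto
      then have "cpath g K Pl \<sigma> (map \<rho> [0..<Suc k'])" by (rule all)
      from step[OF this] k2[of k'] kk k1 have "\<rho> k \<in> E" by auto
      then show ?thesis using k2 by auto
    qed
  qed
qed

lemma sw:
  assumes sg: "subgame g K" and d1: "dominion g Pl Z1 K" and disj: "Z1 \<inter> Z2 = {}" and sub: "Z2 \<subseteq> K"
    and st2: "\<forall>u\<in>Z2. \<exists>\<sigma>. strategy g Pl K \<sigma> \<and> (\<forall>\<rho>. play g K u \<rho> \<and> consistent g Pl \<sigma> \<rho> \<longrightarrow>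
        ((\<forall>i. \<rho> i \<in> Z2) \<and> wins g Pl \<rho>) \<or> (\<exists>k. \<rho> k \<in> Z1 \<and> (\<forall>i<k. \<rho> i \<in> Z2)))"
  shows "dominion g Pl (Z1 \<union> Z2) K"
  unfolding dominion_def
proof (intro conjI ballI)
  show "Z1 \<union> Z2 \<subseteq> K" using d1 sub by (auto simp: dominion_def)
  fix v assume v: "v \<in> Z1 \<union> Z2"
  define good1 where "good1 z \<sigma> \<longleftrightarrow> strategy g Pl K \<sigma> \<and>
    (\<forall>\<rho>. play g K z \<rho> \<and> consistent g Pl \<sigma> \<rho> \<longrightarrow> (\<forall>i. \<rho> i \<in> Z1) \<and> wins g Pl \<rho>)" for z \<sigma>
  define S1 where "S1 z = (SOME \<sigma>. good1 z \<sigma>)" for z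
  have g1: "good1 z (S1 z)" if "z \<in> Z1" for z
  proof -
    have "\<exists>\<sigma>. good1 z \<sigma>" using d1 that unfolding dominion_def good1_def by blast
    then show ?thesis unfolding S1_def by (rule someI_ex)
  qed
  show "\<exists>\<sigma>. strategy g Pl K \<sigma> \<and> (\<forall>\<rho>. play g K v \<rho> \<and> consistent g Pl \<sigma> \<rho> \<longrightarrow> (\<forall>i. \<rho> i \<in> Z1 \<union> Z2) \<and> wins g Pl \<rho>)"
  proof (cases "v \<in> Z1")
    case True then show ?thesis using g1[OF True] unfolding good1_def by blast
  next
    case False
    then have v2: "v \<in> Z2" using v by auto
    obtain \<sigma>2 where st2': "strategy g Pl K \<sigma>2" and c2: "\<forall>\<rho>. play g K v \<rho> \<and> consistent g Pl \<sigma>2 \<rho> \<longrightarrow>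
        ((\<forall>i. \<rho> i \<in> Z2) \<and> wins g Pl \<rho>) \<or> (\<exists>k. \<rho> k \<in> Z1 \<and> (\<forall>i<k. \<rho> i \<in> Z2))"
      using st2 v2 by blast
    define comb where "comb h = (if \<exists>k<length h. h!k \<in> Z1
        then S1 (h ! (LEAST k. h!k \<in> Z1)) (drop (LEAST k. h!k \<in> Z1) h) else \<sigma>2 h)" for h
    show ?thesis
    proof (rule exI[of _ "fixs g K comb"], rule conjI[OF strategy_fixs], intro allI impI)
      fix \<rho> assume pc: "play g K v \<rho> \<and> consistent g Pl (fixs g K comb) \<rho>"
      have r0: "\<rho> 0 = v" and rK: "\<rho> i \<in> K" and re: "(\<rho> i, \<rho> (Suc i)) \<in> edges g" for i
        using pc by (auto simp: play_def)
      have cons: "owns g Pl (\<rho> i) \<Longrightarrow> \<rho> (Suc i) = fixs g K comb (map \<rho> [0..<Suc i])" for i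
        using pc by (simp add: consistent_def)
      have pK: "set (map \<rho> [0..<Suc i]) \<subseteq> K" for i using rK by (auto simp del: upt_Suc)
      have fx: "fixs g K \<tau> (map \<rho> [0..<Suc i]) = \<tau> (map \<rho> [0..<Suc i])"
        if st: "strategy g Pl K \<tau>" and o: "owns g Pl (\<rho> i)" for \<tau> i
        by (rule fixs_valid[OF st _ pK, of _ "\<rho> (Suc i)"]) (use o rK re in \<open>auto simp del: upt_Suc\<close>)
      show "(\<forall>i. \<rho> i \<in> Z1 \<union> Z2) \<and> wins g Pl \<rho>"
      proof (cases "\<exists>i. \<rho> i \<in> Z1")
        case False
        have cb: "comb (map \<rho> [0..<Suc i]) = \<sigma>2 (map \<rho> [0..<Suc i])" for i
          using False by (auto simp: comb_def simp del: upt_Suc)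
        have "consistent g Pl \<sigma>2 \<rho>" unfolding consistent_def
        proof (intro allI impI)
          fix i assume o: "owns g Pl (\<rho> i)"
          have "\<rho> (Suc i) = fixs g K \<sigma>2 (map \<rho> [0..<Suc i])"
            using cons[OF o] fixs_cong2[where \<sigma>=comb and \<tau>=\<sigma>2 and h="map \<rho> [0..<Suc i]" and h'="map \<rho> [0..<Suc i]", OF cb refl] by simp
          then show "\<rho> (Suc i) = \<sigma>2 (map \<rho> [0..<Suc i])" using fx[OF st2' o] by simp
        qed
        then have "((\<forall>i. \<rho> i \<in> Z2) \<and> wins g Pl \<rho>) \<or> (\<exists>k. \<rho> k \<in> Z1 \<and> (\<forall>i<k. \<rho> i \<in> Z2))"
          using c2 pc by blast
        then show ?thesis using False by auto
      next
        case True
        define k where "k = (LEAST i. \<rho> i \<in> Z1)"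
        have k1: "\<rho> k \<in> Z1" using True unfolding k_def by (metis LeastI)
        have k2: "i < k \<Longrightarrow> \<rho> i \<notin> Z1" for i unfolding k_def using not_less_Least by blast
        have combL: "comb (map \<rho> [0..<Suc i]) = \<sigma>2 (map \<rho> [0..<Suc i])" if "i < k" for i
          using k2 that by (auto simp: comb_def simp del: upt_Suc)
        have combR: "comb (map \<rho> [0..<Suc i]) = S1 (\<rho> k) (map (\<lambda>j. \<rho> (j + k)) [0..<Suc (i - k)])"
          if ki: "k \<le> i" for i
        proof -
          let ?p = "map \<rho> [0..<Suc i]"
          have ex: "\<exists>k'<length ?p. ?p!k' \<in> Z1" using ki k1 by (intro exI[of _ k]) (auto simp del: upt_Suc)
          have lk: "(LEAST k'. ?p!k' \<in> Z1) = k"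
          proof (rule Least_equality)
            show "?p ! k \<in> Z1" using ki k1 by (simp del: upt_Suc)
            fix y assume y: "?p ! y \<in> Z1" show "k \<le> y"
            proof (rule ccontr)
              assume "\<not> k \<le> y" then have "y < k" by simp
              then show False using y k2[of y] ki by (simp del: upt_Suc)
            qed
          qed
          show ?thesis unfolding comb_def using ex lk ki k1 by (simp add: map_upt_shift del: upt_Suc)
        qed
        have cpk: "cpath g K Pl \<sigma>2 (map \<rho> [0..<Suc k])"
          unfolding cpath_def
        proof (intro conjI allI impI)
          show "map \<rho> [0..<Suc k] \<noteq> []" by simp
          show "set (map \<rho> [0..<Suc k]) \<subseteq> K" by (rule pK)
        next
          fix j assume j: "Suc j < length (map \<rho> [0..<Suc k])"
          then show "(map \<rho> [0..<Suc k] ! j, map \<rho> [0..<Suc k] ! Suc j) \<in> edges g"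
            using re by (simp del: upt_Suc)
        next
          fix j assume j: "Suc j < length (map \<rho> [0..<Suc k])" and o: "owns g Pl (map \<rho> [0..<Suc k] ! j)"
          have jk: "j < k" using j by simp
          have o': "owns g Pl (\<rho> j)" using o jk by (simp del: upt_Suc)
          have "\<rho> (Suc j) = fixs g K \<sigma>2 (map \<rho> [0..<Suc j])"
            using cons[OF o'] fixs_cong2[where \<sigma>=comb and \<tau>=\<sigma>2 and h="map \<rho> [0..<Suc j]" and h'="map \<rho> [0..<Suc j]", OF combL[OF jk] refl] by simp
          also have "\<dots> = \<sigma>2 (map \<rho> [0..<Suc j])" by (rule fx[OF st2' o'])
          finally show "map \<rho> [0..<Suc k] ! Suc j = \<sigma>2 (take (Suc j) (map \<rho> [0..<Suc k]))"
            using jk by (simp add: take_map_upt del: upt_Suc)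
        qed
        obtain \<rho>'' where r'': "play g K v \<rho>''" "consistent g Pl \<sigma>2 \<rho>''" "\<forall>j<Suc k. \<rho>'' j = \<rho> j"
          using ext_play[OF sg st2' cpk] r0 by (auto simp del: upt_Suc)
        have pre: "\<forall>i<k. \<rho> i \<in> Z2"
        proof -
          from c2 r'' have "((\<forall>i. \<rho>'' i \<in> Z2) \<and> wins g Pl \<rho>'') \<or> (\<exists>k. \<rho>'' k \<in> Z1 \<and> (\<forall>i<k. \<rho>'' i \<in> Z2))"
            by blast
          then show ?thesis
          proof
            assume "(\<forall>i. \<rho>'' i \<in> Z2) \<and> wins g Pl \<rho>''"
            then have "\<rho> k \<in> Z2" using r''(3) by (metis lessI)
            then show ?thesis using k1 disj by auto
          next
            assume "\<exists>k. \<rho>'' k \<in> Z1 \<and> (\<forall>i<k. \<rho>'' i \<in> Z2)"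
            then obtain k' where kk: "\<rho>'' k' \<in> Z1" "\<forall>i<k'. \<rho>'' i \<in> Z2" by blast
            have "k \<le> k'"
            proof (rule ccontr)
              assume "\<not> k \<le> k'" then have "k' < k" by simp
              then show False using kk(1) r''(3) k2[of k'] by auto
            qed
            show ?thesis
            proof (intro allI impI)
              fix i assume "i < k"
              then have "\<rho>'' i = \<rho> i" "i < k'" using r''(3) \<open>k \<le> k'\<close> by auto
              then show "\<rho> i \<in> Z2" using kk(2) by metis
            qed
          qed
        qed
        define \<rho>' where "\<rho>' j = \<rho> (j + k)" for j
        have rfun: "\<rho>' = (\<lambda>j. \<rho> (j + k))" by (rule ext) (simp add: \<rho>'_def)
        have "play g K (\<rho> k) \<rho>'" using pc unfolding play_def \<rho>'_def by auto
        moreover have "consistent g Pl (S1 (\<rho> k)) \<rho>'"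
          unfolding consistent_def
        proof (intro allI impI)
          fix j assume o: "owns g Pl (\<rho>' j)"
          have st1: "strategy g Pl K (S1 (\<rho> k))" using g1[OF k1] unfolding good1_def by blast
          have e1: "map (\<lambda>j. \<rho> (j + k)) [0..<Suc (j + k - k)] = map \<rho>' [0..<Suc j]"
            by (simp add: \<rho>'_def del: upt_Suc)
          have "\<rho>' (Suc j) = \<rho> (Suc (j + k))" by (simp add: \<rho>'_def)
          also have "\<dots> = fixs g K comb (map \<rho> [0..<Suc (j + k)])" using cons o by (simp add: \<rho>'_def)
          also have "\<dots> = fixs g K (S1 (\<rho> k)) (map \<rho>' [0..<Suc j])"
            by (rule fixs_cong2) (use combR[of "j + k"] e1 in \<open>simp_all add: rfun del: upt_Suc\<close>)
          also have "\<dots> = S1 (\<rho> k) (map \<rho>' [0..<Suc j])"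
            by (rule fixs_valid[OF st1, of _ "\<rho>' (Suc j)"])
               (use o rK re in \<open>auto simp: \<rho>'_def simp del: upt_Suc\<close>)
          finally show "\<rho>' (Suc j) = S1 (\<rho> k) (map \<rho>' [0..<Suc j])" .
        qed
        ultimately have suf: "(\<forall>i. \<rho>' i \<in> Z1) \<and> wins g Pl \<rho>'" using g1[OF k1] unfolding good1_def by blast
        have "wins g Pl \<rho>" using suf wins_shift[of g Pl \<rho> k] unfolding \<rho>'_def by simp
        moreover have "\<rho> i \<in> Z1 \<union> Z2" for i
        proof (cases "i < k")
          case True then show ?thesis using pre by auto
        next
          case False
          then have "\<rho> i = \<rho>' (i - k)" by (simp add: \<rho>'_def)
          then show ?thesis using suf by auto
        qed
        ultimately show ?thesis by auto
      qed
    qed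
  qed
qed

inductive_set attrI :: "'v pgame \<Rightarrow> player \<Rightarrow> 'v set \<Rightarrow> 'v set \<Rightarrow> 'v set"
  for g :: "'v pgame" and Pl :: player and S :: "'v set" and K :: "'v set" where
  base: "v \<in> S \<Longrightarrow> v \<in> K \<Longrightarrow> v \<in> attrI g Pl S K"
| own: "v \<in> K \<Longrightarrow> owns g Pl v \<Longrightarrow> w \<in> K \<Longrightarrow> (v, w) \<in> edges g \<Longrightarrow> w \<in> attrI g Pl S K
        \<Longrightarrow> v \<in> attrI g Pl S K"
| oth: "v \<in> K \<Longrightarrow> \<not> owns g Pl v \<Longrightarrow> (\<forall>w\<in>K. (v, w) \<in> edges g \<longrightarrow> w \<in> attrI g Pl S K)
        \<Longrightarrow> v \<in> attrI g Pl S K"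

lemma attrI_sub: "v \<in> attrI g Pl S K \<Longrightarrow> v \<in> K"
  by (induction rule: attrI.induct) auto

lemma step_strat:
  assumes vA: "v \<in> A"
    and own: "owns g Pl v \<Longrightarrow> wz \<in> K \<and> (v, wz) \<in> edges g \<and> (\<exists>\<sigma>. good wz \<sigma>)"
    and oth: "\<not> owns g Pl v \<Longrightarrow> \<forall>w\<in>K. (v, w) \<in> edges g \<longrightarrow> (\<exists>\<sigma>. good w \<sigma>)"
    and gdef: "\<And>w \<sigma>. good w \<sigma> \<longleftrightarrow> strategy g Pl K \<sigma> \<and> (\<forall>\<rho>. play g K w \<rho> \<and> consistent g Pl \<sigma> \<rho> \<longrightarrow>
        (\<exists>k. \<rho> k \<in> S \<and> (\<forall>i\<le>k. \<rho> i \<in> A)))"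
  shows "\<exists>\<sigma>. good v \<sigma>"
proof -
  define T where "T w = (SOME \<sigma>. good w \<sigma>)" for w
  define comb where "comb h = (if length h = 1 then wz else T (h!1) (tl h))" for h
  have "good v (fixs g K comb)" unfolding gdef
  proof (rule conjI[OF strategy_fixs], intro allI impI)
    fix \<rho> assume pc: "play g K v \<rho> \<and> consistent g Pl (fixs g K comb) \<rho>"
    have r0: "\<rho> 0 = v" and rK: "\<rho> i \<in> K" and re: "(\<rho> i, \<rho> (Suc i)) \<in> edges g" for i
      using pc by (auto simp: play_def)
    have cons: "owns g Pl (\<rho> i) \<Longrightarrow> \<rho> (Suc i) = fixs g K comb (map \<rho> [0..<Suc i])" for i
      using pc by (simp add: consistent_def)
    have gw: "good (\<rho> 1) (T (\<rho> 1))"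
    proof (cases "owns g Pl v")
      case True
      have "\<rho> 1 = fixs g K comb [\<rho> 0]" using cons[of 0] True r0 by simp
      also have "\<dots> = wz" using own[OF True] r0 by (simp add: fixs_def comb_def)
      finally show ?thesis using own[OF True] unfolding T_def by (metis someI_ex)
    next
      case False
      have "\<exists>\<sigma>. good (\<rho> 1) \<sigma>" using oth[OF False] rK re[of 0] r0 by auto
      then show ?thesis unfolding T_def by (rule someI_ex)
    qed
    define \<rho>' where "\<rho>' j = \<rho> (Suc j)" for j
    have rfun: "\<rho>' = (\<lambda>j. \<rho> (Suc j))" by (rule ext) (simp add: \<rho>'_def)
    have stT: "strategy g Pl K (T (\<rho> 1))" using gw gdef by blast
    have "play g K (\<rho> 1) \<rho>'" using pc unfolding play_def \<rho>'_def by auto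
    moreover have "consistent g Pl (T (\<rho> 1)) \<rho>'"
      unfolding consistent_def
    proof (intro allI impI)
      fix j assume o: "owns g Pl (\<rho>' j)"
      have "\<rho>' (Suc j) = fixs g K comb (map \<rho> [0..<Suc (Suc j)])" using cons o by (simp add: \<rho>'_def del: upt_Suc)
      also have "\<dots> = fixs g K (T (\<rho> 1)) (map \<rho>' [0..<Suc j])"
        by (rule fixs_cong2) (simp_all add: comb_def rfun tl_map_upt del: upt_Suc)
      also have "\<dots> = T (\<rho> 1) (map \<rho>' [0..<Suc j])"
        by (rule fixs_valid[OF stT, of _ "\<rho>' (Suc j)"])
           (use o rK re in \<open>auto simp: \<rho>'_def simp del: upt_Suc\<close>)
      finally show "\<rho>' (Suc j) = T (\<rho> 1) (map \<rho>' [0..<Suc j])" .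
    qed
    ultimately obtain k where k: "\<rho>' k \<in> S" "\<forall>i\<le>k. \<rho>' i \<in> A" using gw gdef by blast
    show "\<exists>k. \<rho> k \<in> S \<and> (\<forall>i\<le>k. \<rho> i \<in> A)"
    proof (intro exI[of _ "Suc k"] conjI allI impI)
      show "\<rho> (Suc k) \<in> S" using k by (simp add: \<rho>'_def)
      fix i assume "i \<le> Suc k"
      then show "\<rho> i \<in> A" using k(2) vA r0 by (cases i) (auto simp: \<rho>'_def)
    qed
  qed
  then show ?thesis by blast
qed

lemma attr_strat:
  assumes v: "v \<in> attrI g Pl S K"
  shows "\<exists>\<sigma>. strategy g Pl K \<sigma> \<and> (\<forall>\<rho>. play g K v \<rho> \<and> consistent g Pl \<sigma> \<rho> \<longrightarrow>
          (\<exists>k. \<rho> k \<in> S \<and> (\<forall>i\<le>k. \<rho> i \<in> attrI g Pl S K)))"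
  using v
proof (induction rule: attrI.induct)
  case (base v)
  show ?case
  proof (rule exI[of _ "fixs g K (\<lambda>h. h!0)"], rule conjI[OF strategy_fixs], intro allI impI)
    fix \<rho> assume "play g K v \<rho> \<and> consistent g Pl (fixs g K (\<lambda>h. h!0)) \<rho>"
    then have "\<rho> 0 = v" by (simp add: play_def)
    then show "\<exists>k. \<rho> k \<in> S \<and> (\<forall>i\<le>k. \<rho> i \<in> attrI g Pl S K)"
      using base by (intro exI[of _ 0]) (auto intro: attrI.base)
  qed
next
  case (own v w)
  show ?case
    by (rule step_strat[where wz = w and A = "attrI g Pl S K" and K = K and good = "\<lambda>w \<sigma>. strategy g Pl K \<sigma> \<and> (\<forall>\<rho>. play g K w \<rho> \<and> consistent g Pl \<sigma> \<rho> \<longrightarrow> (\<exists>k. \<rho> k \<in> S \<and> (\<forall>i\<le>k. \<rho> i \<in> attrI g Pl S K)))"])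
       (use own in \<open>auto intro: attrI.own\<close>)
next
  case (oth v)
  show ?case
    by (rule step_strat[where wz = undefined and A = "attrI g Pl S K" and K = K and good = "\<lambda>w \<sigma>. strategy g Pl K \<sigma> \<and> (\<forall>\<rho>. play g K w \<rho> \<and> consistent g Pl \<sigma> \<rho> \<longrightarrow> (\<exists>k. \<rho> k \<in> S \<and> (\<forall>i\<le>k. \<rho> i \<in> attrI g Pl S K)))"])
       (use oth in \<open>auto intro: attrI.oth\<close>)
qed

lemma attr_eq:
  assumes sg: "subgame g K"
  shows "attr g Pl S K = attrI g Pl S K"
proof
  show "attrI g Pl S K \<subseteq> attr g Pl S K"
  proof
    fix v assume v: "v \<in> attrI g Pl S K"
    obtain \<sigma> where "strategy g Pl K \<sigma> \<and> (\<forall>\<rho>. play g K v \<rho> \<and> consistent g Pl \<sigma> \<rho> \<longrightarrow>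
          (\<exists>k. \<rho> k \<in> S \<and> (\<forall>i\<le>k. \<rho> i \<in> attrI g Pl S K)))" using attr_strat[OF v] by blast
    then show "v \<in> attr g Pl S K" using attrI_sub[OF v] unfolding attr_def by blast
  qed
next
  show "attr g Pl S K \<subseteq> attrI g Pl S K"
  proof
    fix v assume v: "v \<in> attr g Pl S K"
    then have vK: "v \<in> K" by (simp add: attr_def)
    obtain \<sigma> where st: "strategy g Pl K \<sigma>" and
      re: "\<forall>\<rho>. play g K v \<rho> \<and> consistent g Pl \<sigma> \<rho> \<longrightarrow> (\<exists>i. \<rho> i \<in> S)"
      using v by (auto simp: attr_def)
    show "v \<in> attrI g Pl S K"
    proof (rule ccontr)
      assume nv: "v \<notin> attrI g Pl S K"
      let ?A = "attrI g Pl S K"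
      define f where "f h = (if owns g Pl (last h) then \<sigma> h else (SOME w. w \<in> K \<and> w \<notin> ?A \<and> (last h, w) \<in> edges g))" for h
      define \<rho> where "\<rho> = run f v"
      have rS: "\<rho> (Suc i) = f (map \<rho> [0..<Suc i])" for i by (simp add: \<rho>_def run_Suc del: upt_Suc)
      have B: "\<forall>j\<le>i. \<rho> j \<in> K \<and> \<rho> j \<notin> ?A" for i
      proof (induction i)
        case 0 then show ?case using vK nv by (simp add: \<rho>_def)
      next
        case (Suc i)
        have pK: "set (map \<rho> [0..<Suc i]) \<subseteq> K" using Suc.IH by (auto simp del: upt_Suc)
        have ri: "\<rho> i \<in> K" "\<rho> i \<notin> ?A" using Suc.IH by auto
        have "\<rho> (Suc i) \<in> K \<and> \<rho> (Suc i) \<notin> ?A"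
        proof (cases "owns g Pl (\<rho> i)")
          case True
          obtain w where w: "w \<in> K" "(\<rho> i, w) \<in> edges g" using subgame_succ[OF sg ri(1)] by blast
          have s: "\<sigma> (map \<rho> [0..<Suc i]) \<in> K \<and> (\<rho> i, \<sigma> (map \<rho> [0..<Suc i])) \<in> edges g"
            using strat_app[OF st _ pK, of w] True w by (simp del: upt_Suc)
          have "\<sigma> (map \<rho> [0..<Suc i]) \<notin> ?A"
          proof
            assume "\<sigma> (map \<rho> [0..<Suc i]) \<in> ?A"
            then show False using s True ri attrI.own[of "\<rho> i" K g Pl "\<sigma> (map \<rho> [0..<Suc i])" S] by blast
          qed
          then show ?thesis using s True rS[of i] by (simp add: f_def del: upt_Suc)
        next
          case False
          have "\<exists>w. w \<in> K \<and> w \<notin> ?A \<and> (\<rho> i, w) \<in> edges g"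
          proof (rule ccontr)
            assume "\<not> ?thesis"
            then have "\<rho> i \<in> ?A" using False ri(1) attrI.oth[of "\<rho> i" K g Pl S] by blast
            then show False using ri by simp
          qed
          from someI_ex[OF this] have "(SOME w. w \<in> K \<and> w \<notin> ?A \<and> (\<rho> i, w) \<in> edges g) \<in> K \<and>
                     (SOME w. w \<in> K \<and> w \<notin> ?A \<and> (\<rho> i, w) \<in> edges g) \<notin> ?A"
            by blast
          then show ?thesis using False rS[of i] by (simp add: f_def del: upt_Suc)
        qed
        then show ?case using Suc.IH le_Suc_eq by auto
      qed
      have C: "(\<rho> i, \<rho> (Suc i)) \<in> edges g \<and> (owns g Pl (\<rho> i) \<longrightarrow> \<rho> (Suc i) = \<sigma> (map \<rho> [0..<Suc i]))" for i
      proof -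
        have pK: "set (map \<rho> [0..<Suc i]) \<subseteq> K" using B[of i] by (auto simp del: upt_Suc)
        have ri: "\<rho> i \<in> K" "\<rho> i \<notin> ?A" using B[of i] by auto
        show ?thesis
        proof (cases "owns g Pl (\<rho> i)")
          case True
          obtain w where w: "w \<in> K" "(\<rho> i, w) \<in> edges g" using subgame_succ[OF sg ri(1)] by blast
          have s: "(\<rho> i, \<sigma> (map \<rho> [0..<Suc i])) \<in> edges g"
            using strat_app[OF st _ pK, of w] True w by (simp del: upt_Suc)
          then show ?thesis using True rS[of i] by (simp add: f_def del: upt_Suc)
        next
          case False
          have "\<exists>w. w \<in> K \<and> w \<notin> ?A \<and> (\<rho> i, w) \<in> edges g"
          proof (rule ccontr)
            assume "\<not> ?thesis"
            then have "\<rho> i \<in> ?A" using False ri(1) attrI.oth[of "\<rho> i" K g Pl S] by blast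
            then show False using ri by simp
          qed
          from someI_ex[OF this] have "(\<rho> i, SOME w. w \<in> K \<and> w \<notin> ?A \<and> (\<rho> i, w) \<in> edges g) \<in> edges g"
            by blast
          then show ?thesis using False rS[of i] by (simp add: f_def del: upt_Suc)
        qed
      qed
      have "play g K v \<rho>" unfolding play_def using B C by (auto simp: \<rho>_def)
      moreover have "consistent g Pl \<sigma> \<rho>" unfolding consistent_def using C by auto
      ultimately obtain i where "\<rho> i \<in> S" using re by blast
      moreover have "\<rho> i \<in> K" "\<rho> i \<notin> ?A" using B[of i] by auto
      ultimately show False using attrI.base[of "\<rho> i" S K g Pl] by blast
    qed
  qed
qed

lemma trap_attr:
  assumes pt: "ptrap g P T K" and disj: "T \<inter> S = {}" and Kv: "K \<subseteq> verts g"
  shows "T \<inter> attrI g (opp P) S K = {}"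
proof -
  have "v \<in> attrI g (opp P) S K \<Longrightarrow> v \<notin> T" for v
  proof (induction rule: attrI.induct)
    case (base v) then show ?case using disj by auto
  next
    case (own v w)
    show ?case
    proof
      assume vT: "v \<in> T"
      have "\<not> owns g P v" using own.hyps(1,2) Kv owns_opp[of v g P] by auto
      then have "w \<in> T" using pt vT own.hyps unfolding ptrap_def by blast
      then show False using own.IH by simp
    qed
  next
    case (oth v)
    show ?case
    proof
      assume vT: "v \<in> T"
      have "owns g P v" using oth.hyps(1,2) Kv owns_opp[of v g P] by auto
      then obtain w where "w \<in> T" "(v, w) \<in> edges g" using pt vT unfolding ptrap_def by blast
      moreover have "w \<in> K" using pt \<open>w \<in> T\<close> unfolding ptrap_def by blast
      ultimately show False using oth by blast
    qed
  qed
  then show ?thesis by blast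
qed

lemma compl_attr_ptrap:
  assumes Kv: "K \<subseteq> verts g"
  shows "ptrap g P (K - attrI g (opp P) S K) K"
  unfolding ptrap_def
proof (intro conjI ballI impI)
  show "K - attrI g (opp P) S K \<subseteq> K" by blast
next
  fix v assume v: "v \<in> K - attrI g (opp P) S K" and o: "owns g P v"
  have no: "\<not> owns g (opp P) v" using o v Kv owns_opp[of v g P] by auto
  show "\<exists>w\<in>K - attrI g (opp P) S K. (v, w) \<in> edges g"
  proof (rule ccontr)
    assume "\<not> ?thesis"
    then have "v \<in> attrI g (opp P) S K" using v no attrI.oth[of v K g "opp P" S] by blast
    then show False using v by simp
  qed
next
  fix v w assume v: "v \<in> K - attrI g (opp P) S K" and o: "\<not> owns g P v" and w: "w \<in> K" "(v, w) \<in> edges g"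
  have no: "owns g (opp P) v" using o v Kv owns_opp[of v g P] by auto
  show "w \<in> K - attrI g (opp P) S K"
  proof (rule ccontr)
    assume "\<not> ?thesis"
    then have "v \<in> attrI g (opp P) S K" using v no w attrI.own[of v K g "opp P" w S] by blast
    then show False using v by simp
  qed
qed

lemma attrI_idem: "attrI g Pl (attrI g Pl S K) K = attrI g Pl S K"
proof
  show "attrI g Pl (attrI g Pl S K) K \<subseteq> attrI g Pl S K"
  proof
    fix v assume "v \<in> attrI g Pl (attrI g Pl S K) K"
    then show "v \<in> attrI g Pl S K"
    proof (induction rule: attrI.induct)
      case (base v) then show ?case by simp
    next
      case (own v w) then show ?case using attrI.own[of v K g Pl w S] by blast
    next
      case (oth v)
      then have "\<forall>w\<in>K. (v, w) \<in> edges g \<longrightarrow> w \<in> attrI g Pl S K" by blast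
      then show ?case using oth.hyps attrI.oth[of v K g Pl S] by blast
    qed
  qed
  show "attrI g Pl S K \<subseteq> attrI g Pl (attrI g Pl S K) K"
  proof
    fix v assume v: "v \<in> attrI g Pl S K"
    show "v \<in> attrI g Pl (attrI g Pl S K) K" by (rule attrI.base[OF v attrI_sub[OF v]])
  qed
qed

lemma ptrap_trans:
  assumes a: "ptrap g P T2 T1" and b: "ptrap g P T1 T0"
  shows "ptrap g P T2 T0"
  unfolding ptrap_def
proof (intro conjI ballI impI)
  have s1: "T2 \<subseteq> T1" and s0: "T1 \<subseteq> T0" using a b by (simp_all add: ptrap_def)
  then show "T2 \<subseteq> T0" by (rule subset_trans)
  fix v assume v: "v \<in> T2"
  {
    assume "owns g P v"
    then show "\<exists>w\<in>T2. (v, w) \<in> edges g" using a v unfolding ptrap_def by blast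
  next
    assume o: "\<not> owns g P v"
    fix w assume w: "w \<in> T0" "(v, w) \<in> edges g"
    have "v \<in> T1" using v s1 by blast
    then have "w \<in> T1" using b o w unfolding ptrap_def by blast
    then show "w \<in> T2" using a o w v unfolding ptrap_def by blast
  }
qed

lemma ptrap_subgame:
  assumes sg: "subgame g K" and pt: "ptrap g P T K"
  shows "subgame g T"
  unfolding subgame_def
proof (intro conjI ballI)
  have "T \<subseteq> K" using pt by (simp add: ptrap_def)
  then show "T \<subseteq> verts g" using sg by (auto simp: subgame_def)
  fix v assume v: "v \<in> T"
  show "\<exists>w\<in>T. (v, w) \<in> edges g"
  proof (cases "owns g P v")
    case True then show ?thesis using pt v unfolding ptrap_def by blast
  next
    case False
    obtain w where "w \<in> K" "(v, w) \<in> edges g" using sg v \<open>T \<subseteq> K\<close> unfolding subgame_def by blast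
    then show ?thesis using pt v False unfolding ptrap_def by blast
  qed
qed

lemma ptrap_self: "subgame g K \<Longrightarrow> ptrap g P K K"
  unfolding ptrap_def subgame_def by auto

lemma subgame_verts: "subgame g K \<Longrightarrow> K \<subseteq> verts g"
  by (simp add: subgame_def)

lemma ptrap_closed:
  assumes sg: "subgame g K" and pt: "ptrap g P T K"
  shows "closed g P T K"
proof -
  let ?A = "attrI g (opp P) (K - T) K"
  have d: "T \<inter> ?A = {}"
    by (rule trap_attr[OF pt _ subgame_verts[OF sg]]) auto
  have s1: "?A \<subseteq> K - T"
  proof
    fix v assume v: "v \<in> ?A"
    then have "v \<in> K" by (rule attrI_sub)
    moreover have "v \<notin> T" using d v by auto
    ultimately show "v \<in> K - T" by simp
  qed
  have s2: "K - T \<subseteq> ?A"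
  proof
    fix v assume v: "v \<in> K - T"
    show "v \<in> ?A" by (rule attrI.base) (use v in simp_all)
  qed
  have "attr g (opp P) (K - T) K = K - T" unfolding attr_eq[OF sg] using s1 s2 by (rule subset_antisym)
  then show ?thesis unfolding closed_def .
qed

lemma imp_eq_d:
  assumes fin: "finite K" and inK: "\<forall>i. \<rho> i \<in> K" and pr: "\<forall>v\<in>K. prio g v \<le> d"
    and inf: "infinite {i. \<rho> i \<in> N}" and NK: "N \<subseteq> K" and Nd: "\<forall>v\<in>N. prio g v = d"
  shows "inf_max_prio g \<rho> = d"
proof -
  have finN: "finite N" using fin NK finite_subset by blast
  have "\<exists>u\<in>N. infinite {i. \<rho> i = u}"
  proof (rule ccontr)
    assume "\<not> ?thesis"
    then have "\<forall>u\<in>N. finite {i. \<rho> i = u}" by blast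
    then have "finite (\<Union>u\<in>N. {i. \<rho> i = u})" using finN by blast
    moreover have "{i. \<rho> i \<in> N} = (\<Union>u\<in>N. {i. \<rho> i = u})" by blast
    ultimately show False using inf by simp
  qed
  then obtain u where u: "u \<in> N" "infinite {i. \<rho> i = u}" by blast
  let ?M = "{prio g u | u. infinite {i. \<rho> i = u}}"
  have sub: "?M \<subseteq> prio g ` K"
  proof
    fix x assume "x \<in> ?M"
    then obtain u where x: "x = prio g u" "infinite {i. \<rho> i = u}" by blast
    then obtain i where "\<rho> i = u" using not_finite_existsD by blast
    then show "x \<in> prio g ` K" using x inK by blast
  qed
  have le: "y \<le> d" if "y \<in> ?M" for y
  proof -
    have "y \<in> prio g ` K" using sub that by blast
    then obtain w where "w \<in> K" "y = prio g w" by blast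
    then show ?thesis using pr by simp
  qed
  have dm: "d \<in> ?M" using u Nd by force
  have finM: "finite ?M" using sub fin finite_surj by blast
  have "Max ?M = d" by (rule Max_eqI[OF finM le dm])
  then show ?thesis unfolding inf_max_prio_def .
qed

lemma key_S:
  assumes sg: "subgame g K" and fin: "finite K"
    and pr: "\<forall>v\<in>K. prio g v \<le> d"
    and par: "\<forall>\<rho>. inf_max_prio g \<rho> = d \<longrightarrow> \<not> wins g Q \<rho>"
    and dom: "dominion g Q X K" and ne: "X \<noteq> {}"
  shows "\<exists>R. R \<noteq> {} \<and> R \<subseteq> X \<and> R \<inter> attrI g (opp Q) {v\<in>K. prio g v = d} K = {} \<and>
             dominion g Q R (K - attrI g (opp Q) {v\<in>K. prio g v = d} K)"
proof -
  define Nd where "Nd = {v\<in>K. prio g v = d}"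
  define A where "A = attrI g (opp Q) Nd K"
  have Kv: "K \<subseteq> verts g" using sg by (simp add: subgame_def)
  have XK: "X \<subseteq> K" using dom by (simp add: dominion_def)
  obtain v where vX: "v \<in> X" using ne by blast
  then have vK: "v \<in> K" using XK by blast
  obtain \<tau> where st: "strategy g Q K \<tau>" and
    win: "\<forall>\<rho>. play g K v \<rho> \<and> consistent g Q \<tau> \<rho> \<longrightarrow> (\<forall>i. \<rho> i \<in> X) \<and> wins g Q \<rho>"
    using dom vX by (auto simp: dominion_def)
  have win': "\<forall>\<rho>. play g K v \<rho> \<and> consistent g Q \<tau> \<rho> \<longrightarrow> (\<forall>i. \<rho> i \<in> X)" using win by blast
  define T where "T = {h. cpath g K Q \<tau> h \<and> hd h = v}"
  have F1: "set h \<subseteq> X" if "h \<in> T" for h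
    using dom_path[OF sg st win'] that unfolding T_def by blast
  have hK: "set h \<subseteq> K" "h \<noteq> []" if "h \<in> T" for h using that unfolding T_def cpath_def by auto
  have Tsnoc: "h @ [w] \<in> T" if h: "h \<in> T" and w: "w \<in> K" "(last h, w) \<in> edges g"
      and o: "owns g Q (last h) \<longrightarrow> w = \<tau> h" for h w
  proof -
    have "cpath g K Q \<tau> (h @ [w])" using cpath_snoc[of g K Q \<tau> h w] h w o unfolding T_def by blast
    moreover have "hd (h @ [w]) = v" using h hK(2)[OF h] unfolding T_def by simp
    ultimately show ?thesis unfolding T_def by blast
  qed
  have tauS: "\<tau> h \<in> K \<and> (last h, \<tau> h) \<in> edges g" if h: "h \<in> T" and o: "owns g Q (last h)" for h
  proof -
    have "last h \<in> K" using hK[OF h] by auto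
    then obtain w where "w \<in> K" "(last h, w) \<in> edges g" using subgame_succ[OF sg] by blast
    then show ?thesis using strat_app[OF st hK(2)[OF h] hK(1)[OF h] o] by blast
  qed
  have F2: "\<exists>w. h @ [w] \<in> T" if h: "h \<in> T" for h
  proof (cases "owns g Q (last h)")
    case True then show ?thesis using Tsnoc[OF h] tauS[OF h True] by blast
  next
    case False
    have "last h \<in> K" using hK[OF h] by auto
    then obtain w where "w \<in> K" "(last h, w) \<in> edges g" using subgame_succ[OF sg] by blast
    then show ?thesis using Tsnoc[OF h] False by blast
  qed
  have F3: "\<forall>h\<in>T. last h = x \<longrightarrow> (\<exists>h'\<in>T. (\<exists>ys. h' = h @ ys) \<and> last h' \<in> Nd)" if "x \<in> A" for x
    using that unfolding A_def
  proof (induction rule: attrI.induct)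
    case (base x)
    then show ?case by (metis append_Nil2)
  next
    case (own x w)
    show ?case
    proof (intro ballI impI)
      fix h assume h: "h \<in> T" and lx: "last h = x"
      have "\<not> owns g Q x" using own.hyps(1,2) Kv owns_opp[of x g Q] by auto
      then have "h @ [w] \<in> T" using Tsnoc[OF h] own.hyps lx by auto
      then obtain h' where "h' \<in> T" "\<exists>ys. h' = (h @ [w]) @ ys" "last h' \<in> Nd" using own.IH by auto
      then show "\<exists>h'\<in>T. (\<exists>ys. h' = h @ ys) \<and> last h' \<in> Nd" by auto
    qed
  next
    case (oth x)
    show ?case
    proof (intro ballI impI)
      fix h assume h: "h \<in> T" and lx: "last h = x"
      have o: "owns g Q x" using oth.hyps(1,2) Kv owns_opp[of x g Q] by auto
      have s: "\<tau> h \<in> K \<and> (last h, \<tau> h) \<in> edges g" using tauS[OF h] o lx by simp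
      then have hT: "h @ [\<tau> h] \<in> T" using Tsnoc[OF h] by auto
      have tK: "\<tau> h \<in> K" and tE: "(x, \<tau> h) \<in> edges g" using s lx by auto
      have ih: "\<tau> h \<in> attrI g (opp Q) Nd K \<and> (\<forall>hh\<in>T. last hh = \<tau> h \<longrightarrow> (\<exists>h'\<in>T. (\<exists>ys. h' = hh @ ys) \<and> last h' \<in> Nd))"
        by (rule mp[OF bspec[OF oth.IH tK] tE])
      have "last (h @ [\<tau> h]) = \<tau> h" by simp
      then obtain h' where "h' \<in> T" "\<exists>ys. h' = (h @ [\<tau> h]) @ ys" "last h' \<in> Nd"
        using ih hT by blast
      then show "\<exists>h'\<in>T. (\<exists>ys. h' = h @ ys) \<and> last h' \<in> Nd" by auto
    qed
  qed
  show ?thesis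
  proof (cases "\<exists>h0\<in>T. \<forall>h'\<in>T. (\<exists>ys. h' = h0 @ ys) \<longrightarrow> last h' \<notin> A")
    case False
    have nx: "\<exists>h'. h' \<in> T \<and> (\<exists>ys. h' = h @ ys) \<and> length h' > length h \<and> last h' \<in> Nd" if h: "h \<in> T" for h
    proof -
      obtain w where h1: "h @ [w] \<in> T" using F2[OF h] by blast
      obtain h2 ys2 where h2: "h2 \<in> T" "h2 = (h @ [w]) @ ys2" "last h2 \<in> A" using False h1 by blast
      obtain h3 ys3 where h3: "h3 \<in> T" "h3 = h2 @ ys3" "last h3 \<in> Nd" using F3[OF h2(3)] h2(1) by blast
      show ?thesis by (rule exI[of _ h3]) (use h2 h3 in auto)
    qed
    define nxt where "nxt h = (SOME h'. h' \<in> T \<and> (\<exists>ys. h' = h @ ys) \<and> length h' > length h \<and> last h' \<in> Nd)" for h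
    define sq where "sq n = (nxt ^^ n) [v]" for n
    have nxtP: "nxt h \<in> T \<and> (\<exists>ys. nxt h = h @ ys) \<and> length (nxt h) > length h \<and> last (nxt h) \<in> Nd"
      if "h \<in> T" for h
      unfolding nxt_def by (rule someI_ex[OF nx[OF that]])
    have sqS: "sq (Suc n) = nxt (sq n)" for n by (simp add: sq_def)
    have sqT: "sq n \<in> T" for n
    proof (induction n)
      case 0 show ?case using vK by (simp add: sq_def T_def cpath_single)
    next
      case (Suc n) then show ?case using nxtP sqS by simp
    qed
    have len: "length (sq n) > n" for n
    proof (induction n)
      case 0 show ?case by (simp add: sq_def)
    next
      case (Suc n) then show ?case using nxtP[OF sqT[of n]] sqS[of n] by simp
    qed
    have pre: "\<exists>ys. sq m = sq n @ ys" if "n \<le> m" for n m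
      using that
    proof (induction m)
      case 0 then show ?case by simp
    next
      case (Suc m)
      show ?case
      proof (cases "n = Suc m")
        case True then show ?thesis by simp
      next
        case False
        then have "n \<le> m" using Suc.prems by simp
        then obtain ys where "sq m = sq n @ ys" using Suc.IH by blast
        moreover obtain zs where "sq (Suc m) = sq m @ zs" using nxtP[OF sqT[of m]] sqS[of m] by auto
        ultimately show ?thesis by auto
      qed
    qed
    define \<rho> where "\<rho> i = sq i ! i" for i
    have nth: "\<rho> j = sq n ! j" if "j < length (sq n)" for j n
    proof (cases "j \<le> n")
      case True
      then obtain ys where "sq n = sq j @ ys" using pre by blast
      then show ?thesis using len[of j] by (simp add: \<rho>_def nth_append)
    next
      case False
      then obtain ys where "sq j = sq n @ ys" using pre[of n j] by auto
      then show ?thesis using that by (simp add: \<rho>_def nth_append)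
    qed
    have mp: "map \<rho> [0..<Suc n] = take (Suc n) (sq n)" for n
      by (rule nth_equalityI) (use len[of n] nth in \<open>auto simp del: upt_Suc\<close>)
    have cpT: "map \<rho> [0..<Suc n] \<in> T" for n
    proof -
      have "cpath g K Q \<tau> (take (Suc n) (sq n))" using cpath_take[of g K Q \<tau> "sq n" "Suc n"] sqT[of n] unfolding T_def by simp
      moreover have "hd (take (Suc n) (sq n)) = v" using sqT[of n] hK(2)[OF sqT[of n]] unfolding T_def by simp
      ultimately show ?thesis unfolding mp T_def by simp
    qed
    have r0: "\<rho> 0 = v" using cpT[of 0] unfolding T_def by simp
    have "play g K (\<rho> 0) \<rho> \<and> consistent g Q \<tau> \<rho>" using cpT unfolding T_def by (intro cpath_play) auto
    then have W: "(\<forall>i. \<rho> i \<in> X) \<and> wins g Q \<rho>" using win r0 by auto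
    have infN: "infinite {i. \<rho> i \<in> Nd}" unfolding infinite_nat_iff_unbounded
    proof
      fix m
      let ?i = "length (sq (Suc m)) - 1"
      have sne: "sq (Suc m) \<noteq> []" using len[of "Suc m"] by auto
      have "\<rho> ?i = last (sq (Suc m))" using nth[of ?i "Suc m"] len[of "Suc m"] sne by (simp add: last_conv_nth)
      moreover have "last (sq (Suc m)) \<in> Nd" using nxtP[OF sqT[of m]] sqS[of m] by simp
      moreover have "?i > m" using len[of "Suc m"] by simp
      ultimately show "\<exists>n>m. n \<in> {i. \<rho> i \<in> Nd}" by (intro exI[of _ ?i]) simp
    qed
    have "inf_max_prio g \<rho> = d"
      by (rule imp_eq_d[OF fin _ pr infN]) (use W XK in \<open>auto simp: Nd_def\<close>)
    then show ?thesis using par W by blast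
  next
    case True
    then obtain h0 where h0: "h0 \<in> T" and h0p: "\<forall>h'\<in>T. (\<exists>ys. h' = h0 @ ys) \<longrightarrow> last h' \<notin> A" by blast
    define R where "R = {last h' | h'. h' \<in> T \<and> (\<exists>ys. h' = h0 @ ys)}"
    have "last h0 \<in> R" unfolding R_def using h0 by (metis (mono_tags, lifting) append_Nil2 mem_Collect_eq)
    then have Rne: "R \<noteq> {}" by blast
    have RX: "R \<subseteq> X"
    proof
      fix x assume "x \<in> R"
      then obtain h' where h': "h' \<in> T" "x = last h'" unfolding R_def by blast
      then have "x \<in> set h'" using hK(2)[OF h'(1)] by simp
      then show "x \<in> X" using F1[OF h'(1)] by blast
    qed
    have RA: "R \<inter> A = {}" unfolding R_def using h0p by blast
    have RKA: "R \<subseteq> K - A" using RX XK RA by blast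
    have Rdom: "dominion g Q R (K - A)"
      unfolding dominion_def
    proof (intro conjI ballI)
      show "R \<subseteq> K - A" by (rule RKA)
      fix u assume "u \<in> R"
      then obtain h' ys' where h': "h' \<in> T" "h' = h0 @ ys'" "last h' = u" unfolding R_def by blast
      define \<sigma>' where "\<sigma>' = fixs g (K - A) (\<lambda>k. \<tau> (butlast h' @ k))"
      show "\<exists>\<sigma>. strategy g Q (K - A) \<sigma> \<and> (\<forall>\<rho>. play g (K - A) u \<rho> \<and> consistent g Q \<sigma> \<rho> \<longrightarrow> (\<forall>i. \<rho> i \<in> R) \<and> wins g Q \<rho>)"
      proof (rule exI[of _ \<sigma>'], rule conjI, unfold \<sigma>'_def, rule strategy_fixs, fold \<sigma>'_def, intro allI impI)
        fix \<rho> assume pc: "play g (K - A) u \<rho> \<and> consistent g Q \<sigma>' \<rho>"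
        have r0: "\<rho> 0 = u" and rK: "\<rho> i \<in> K - A" and re: "(\<rho> i, \<rho> (Suc i)) \<in> edges g" for i
          using pc by (auto simp: play_def)
        have cons: "owns g Q (\<rho> i) \<Longrightarrow> \<rho> (Suc i) = \<sigma>' (map \<rho> [0..<Suc i])" for i
          using pc by (simp add: consistent_def)
        define hist where "hist i = butlast h' @ map \<rho> [0..<Suc i]" for i
        have hne: "h' \<noteq> []" using hK(2)[OF h'(1)] .
        have hist: "hist i \<in> T \<and> (\<exists>ys. hist i = h0 @ ys)" for i
        proof (induction i)
          case 0
          have "hist 0 = butlast h' @ [last h']" using h'(3) r0 by (simp add: hist_def)
          then have "hist 0 = h'" using hne by simp
          then show ?case using h' by auto
        next
          case (Suc i)
          have hs: "hist (Suc i) = hist i @ [\<rho> (Suc i)]" by (simp add: hist_def)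
          have lh: "last (hist i) = \<rho> i" by (simp add: hist_def del: upt_Suc)
          have "hist i @ [\<rho> (Suc i)] \<in> T"
          proof (cases "owns g Q (\<rho> i)")
            case True
            have s: "\<tau> (hist i) \<in> K \<and> (\<rho> i, \<tau> (hist i)) \<in> edges g" using tauS[of "hist i"] Suc.IH True lh by auto
            have hT: "hist i @ [\<tau> (hist i)] \<in> T" using Tsnoc[of "hist i" "\<tau> (hist i)"] Suc.IH s lh by auto
            have "last (hist i @ [\<tau> (hist i)]) \<notin> A" using h0p hT Suc.IH by fastforce
            then have inKA: "\<tau> (hist i) \<in> K - A" using s by simp
            have "\<rho> (Suc i) = \<tau> (hist i)"
              using cons[OF True] fixs_eq[of "\<lambda>k. \<tau> (butlast h' @ k)" "map \<rho> [0..<Suc i]" "K - A" g] inKA s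
              unfolding \<sigma>'_def hist_def by (simp del: upt_Suc)
            then show ?thesis using hT by simp
          next
            case False
            show ?thesis using Tsnoc[of "hist i" "\<rho> (Suc i)"] Suc.IH False lh rK re by auto
          qed
          then show ?case using hs Suc.IH by auto
        qed
        have inR: "\<rho> i \<in> R" for i
        proof -
          have "last (hist i) = \<rho> i" by (simp add: hist_def del: upt_Suc)
          then have "\<exists>h'. \<rho> i = last h' \<and> h' \<in> T \<and> (\<exists>ys. h' = h0 @ ys)" using hist[of i] by metis
          then show ?thesis unfolding R_def by simp
        qed
        define L where "L = length h' - 1"
        define \<rho>2 where "\<rho>2 j = (if j < L then h' ! j else \<rho> (j - L))" for j
        have hL: "h' ! L = u" using hne h'(3) by (simp add: L_def last_conv_nth)
        have bl: "butlast h' @ [u] = h'" using hne h'(3) by (metis append_butlast_last_id)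
        have m2: "map \<rho>2 [0..<Suc n] \<in> T" for n
        proof (cases "n < L")
          case True
          have "map \<rho>2 [0..<Suc n] = take (Suc n) h'"
            by (rule nth_equalityI) (use True in \<open>auto simp: \<rho>2_def L_def simp del: upt_Suc\<close>)
          moreover have "cpath g K Q \<tau> (take (Suc n) h')" using cpath_take[of g K Q \<tau> h' "Suc n"] h'(1) unfolding T_def by simp
          moreover have "hd (take (Suc n) h') = v" using h'(1) hne unfolding T_def by simp
          ultimately show ?thesis unfolding T_def by simp
        next
          case False
          have lb: "length (butlast h') = L" by (simp add: L_def)
          have "map \<rho>2 [0..<Suc n] = hist (n - L)"
          proof (rule nth_equalityI)
            show "length (map \<rho>2 [0..<Suc n]) = length (hist (n - L))" using False lb by (simp add: hist_def)
            fix j assume j: "j < length (map \<rho>2 [0..<Suc n])"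
            show "map \<rho>2 [0..<Suc n] ! j = hist (n - L) ! j"
            proof (cases "j < L")
              case True
              then show ?thesis using j lb by (simp add: \<rho>2_def hist_def nth_append nth_butlast del: upt_Suc)
            next
              case False': False
              then show ?thesis using j lb False by (simp add: \<rho>2_def hist_def nth_append del: upt_Suc)
            qed
          qed
          then show ?thesis using hist by simp
        qed
        have "play g K (\<rho>2 0) \<rho>2 \<and> consistent g Q \<tau> \<rho>2" using m2 unfolding T_def by (intro cpath_play) auto
        moreover have "\<rho>2 0 = v" using m2[of 0] unfolding T_def by simp
        ultimately have "wins g Q \<rho>2" using win by auto
        moreover have "(\<lambda>i. \<rho>2 (i + L)) = \<rho>" by (rule ext) (simp add: \<rho>2_def)
        ultimately have "wins g Q \<rho>" using wins_shift[of g Q \<rho>2 L] by simp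
        then show "(\<forall>i. \<rho> i \<in> R) \<and> wins g Q \<rho>" using inR by blast
      qed
    qed
    show ?thesis using Rne RX RA Rdom unfolding A_def Nd_def by blast
  qed
qed

lemma tr:
  assumes sgK: "subgame g K" and dom: "dominion g Pl Z K"
    and c1: "\<forall>u\<in>Z\<inter>K'. owns g Pl u \<longrightarrow> (\<forall>w\<in>Z. (u,w)\<in>edges g \<longrightarrow> w\<in>K')"
    and c2: "\<forall>u\<in>Z\<inter>K'. \<not> owns g Pl u \<longrightarrow> (\<forall>w\<in>K'. (u,w)\<in>edges g \<longrightarrow> w\<in>K)"
  shows "dominion g Pl (Z \<inter> K') K'"
  unfolding dominion_def
proof (intro conjI ballI)
  show "Z \<inter> K' \<subseteq> K'" by blast
  fix u assume u: "u \<in> Z \<inter> K'"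
  have c2': "\<forall>u\<in>Z\<inter>K'. \<not> owns g Pl u \<longrightarrow> (\<forall>w\<in>K'. (u,w)\<in>edges g \<longrightarrow> w\<in>K \<or> w\<in>{})" using c2 by blast
  obtain \<sigma>' where "strategy g Pl K' \<sigma>' \<and> (\<forall>\<rho>. play g K' u \<rho> \<and> consistent g Pl \<sigma>' \<rho> \<longrightarrow>
        ((\<forall>i. \<rho> i \<in> Z \<inter> K') \<and> wins g Pl \<rho>) \<or> (\<exists>k. \<rho> k \<in> {} \<and> (\<forall>i<k. \<rho> i \<in> Z \<inter> K')))"
    using tre[OF sgK dom c1 c2' u] by blast
  then show "\<exists>\<sigma>. strategy g Pl K' \<sigma> \<and> (\<forall>\<rho>. play g K' u \<rho> \<and> consistent g Pl \<sigma> \<rho> \<longrightarrow> (\<forall>i. \<rho> i \<in> Z \<inter> K') \<and> wins g Pl \<rho>)"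
    by blast
qed

lemma attr_dom:
  assumes sg: "subgame g K" and d: "dominion g Pl Z K"
  shows "dominion g Pl (attrI g Pl Z K) K"
proof -
  have ZK: "Z \<subseteq> K" using d by (simp add: dominion_def)
  have ZA: "Z \<subseteq> attrI g Pl Z K"
  proof
    fix v assume "v \<in> Z" then show "v \<in> attrI g Pl Z K" using ZK by (intro attrI.base) auto
  qed
  have "dominion g Pl (Z \<union> (attrI g Pl Z K - Z)) K"
  proof (rule sw[OF sg d])
    show "Z \<inter> (attrI g Pl Z K - Z) = {}" by blast
    show "attrI g Pl Z K - Z \<subseteq> K"
    proof
      fix v assume "v \<in> attrI g Pl Z K - Z"
      then have "v \<in> attrI g Pl Z K" by simp
      then show "v \<in> K" by (rule attrI_sub)
    qed
    show "\<forall>u\<in>attrI g Pl Z K - Z. \<exists>\<sigma>. strategy g Pl K \<sigma> \<and> (\<forall>\<rho>. play g K u \<rho> \<and> consistent g Pl \<sigma> \<rho> \<longrightarrow>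
        ((\<forall>i. \<rho> i \<in> attrI g Pl Z K - Z) \<and> wins g Pl \<rho>) \<or> (\<exists>k. \<rho> k \<in> Z \<and> (\<forall>i<k. \<rho> i \<in> attrI g Pl Z K - Z)))"
    proof
      fix u assume "u \<in> attrI g Pl Z K - Z"
      then obtain \<sigma> where st: "strategy g Pl K \<sigma>" and
        r: "\<forall>\<rho>. play g K u \<rho> \<and> consistent g Pl \<sigma> \<rho> \<longrightarrow> (\<exists>k. \<rho> k \<in> Z \<and> (\<forall>i\<le>k. \<rho> i \<in> attrI g Pl Z K))"
        using attr_strat[of u g Pl Z K] by blast
      show "\<exists>\<sigma>. strategy g Pl K \<sigma> \<and> (\<forall>\<rho>. play g K u \<rho> \<and> consistent g Pl \<sigma> \<rho> \<longrightarrow>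
        ((\<forall>i. \<rho> i \<in> attrI g Pl Z K - Z) \<and> wins g Pl \<rho>) \<or> (\<exists>k. \<rho> k \<in> Z \<and> (\<forall>i<k. \<rho> i \<in> attrI g Pl Z K - Z)))"
      proof (rule exI[of _ \<sigma>], rule conjI[OF st], intro allI impI disjI2)
        fix \<rho> assume pc: "play g K u \<rho> \<and> consistent g Pl \<sigma> \<rho>"
        then obtain k where k: "\<rho> k \<in> Z" "\<forall>i\<le>k. \<rho> i \<in> attrI g Pl Z K" using r by blast
        define k0 where "k0 = (LEAST i. \<rho> i \<in> Z)"
        have k01: "\<rho> k0 \<in> Z" using k(1) unfolding k0_def by (rule LeastI)
        have k02: "k0 \<le> k" using k(1) unfolding k0_def by (rule Least_le)
        have k03: "\<rho> i \<notin> Z" if "i < k0" for i using that not_less_Least unfolding k0_def by blast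
        show "\<exists>k. \<rho> k \<in> Z \<and> (\<forall>i<k. \<rho> i \<in> attrI g Pl Z K - Z)"
        proof (intro exI[of _ k0] conjI allI impI)
          show "\<rho> k0 \<in> Z" by (rule k01)
          fix i assume "i < k0"
          then show "\<rho> i \<in> attrI g Pl Z K - Z" using k03 k(2) k02 by auto
        qed
      qed
    qed
  qed
  moreover have "Z \<union> (attrI g Pl Z K - Z) = attrI g Pl Z K" using ZA by blast
  ultimately show ?thesis by simp
qed

lemma attrI_empty:
  assumes sg: "subgame g K"
  shows "attrI g Pl {} K = {}"
proof -
  have "v \<in> attrI g Pl {} K \<Longrightarrow> False" for v
  proof (induction rule: attrI.induct)
    case (base v) then show ?case by simp
  next
    case (own v w) then show ?case by simp
  next
    case (oth v)
    obtain w where "w \<in> K" "(v, w) \<in> edges g" using subgame_succ[OF sg oth.hyps(1)] by blast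
    then show ?case using oth.IH by blast
  qed
  then show ?thesis by blast
qed

lemma dom_empty: "dominion g Pl {} K"
  by (simp add: dominion_def)

lemma own_opp_in: "v \<in> verts g \<Longrightarrow> owns g (opp P) v \<Longrightarrow> \<not> owns g P v"
  by (simp add: owns_opp)
lemma nown_opp_in: "v \<in> verts g \<Longrightarrow> \<not> owns g (opp P) v \<Longrightarrow> owns g P v"
  by (simp add: owns_opp)

lemma step_iii:
  assumes pg: "parity_game g" and sg: "subgame g G" and pr: "\<forall>v\<in>G. prio g v \<le> d"
    and par: "\<forall>\<rho>. inf_max_prio g \<rho> = d \<longrightarrow> \<not> wins g (opp P) \<rho>"
    and G1: "ptrap g P G1 G" and H: "H = G1 - attrI g P {v\<in>G1. prio g v = d} G1" and WH: "W \<subseteq> H"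
    and G2: "G2 = G1 - attrI g (opp P) W G1" and G3: "G3 \<subseteq> G2"
    and a: "\<forall>Z. dominion g (opp P) Z G \<and> card Z \<le> pop div 2 \<longrightarrow> Z \<inter> G1 = {}"
    and b: "\<forall>Z. dominion g (opp P) Z H \<and> card Z \<le> pop \<longrightarrow> Z \<subseteq> W"
    and c: "\<forall>Z. dominion g (opp P) Z G2 \<and> card Z \<le> pop div 2 \<longrightarrow> Z \<inter> G3 = {}"
    and D: "dominion g (opp P) D G" and cD: "card D \<le> pop"
  shows "D \<inter> G3 = {}"
proof -
  let ?Q = "opp P"
  have Gv: "G \<subseteq> verts g" using sg by (simp add: subgame_def)
  have finV: "finite (verts g)" using pg by (simp add: parity_game_def)
  have DG: "D \<subseteq> G" using D by (simp add: dominion_def)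
  have finD: "finite D" by (rule finite_subset[OF _ finV]) (use DG Gv in blast)
  have ptD: "ptrap g ?Q D G" by (rule dom_ptrap[OF sg D])
  have sgD: "subgame g D" by (rule ptrap_subgame[OF sg ptD])
  have Dv: "D \<subseteq> verts g" using DG Gv by blast
  have G1G: "G1 \<subseteq> G" using G1 by (simp add: ptrap_def)
  have sgG1: "subgame g G1" by (rule ptrap_subgame[OF sg G1])
  have G1v: "G1 \<subseteq> verts g" using G1G Gv by blast
  have G2G1: "G2 \<subseteq> G1" using G2 by blast
  have ptG2: "ptrap g P G2 G1" unfolding G2 using compl_attr_ptrap[OF G1v, of P W] by simp
  have ptG2G: "ptrap g P G2 G" by (rule ptrap_trans[OF ptG2 G1])
  have HG1: "H \<subseteq> G1" using H by blast
  have DD: "dominion g ?Q D D"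
  proof -
    have "dominion g ?Q (D \<inter> D) D"
    proof (rule tr[OF sg D])
      show "\<forall>u\<in>D \<inter> D. owns g ?Q u \<longrightarrow> (\<forall>w\<in>D. (u, w) \<in> edges g \<longrightarrow> w \<in> D)" by blast
      show "\<forall>u\<in>D \<inter> D. \<not> owns g ?Q u \<longrightarrow> (\<forall>w\<in>D. (u, w) \<in> edges g \<longrightarrow> w \<in> G)" using DG by blast
    qed
    then show ?thesis by simp
  qed
  have lift: "dominion g ?Q Z G" if z: "dominion g ?Q Z D" for Z
  proof -
    have ZD: "Z \<subseteq> D" using z by (simp add: dominion_def)
    have "dominion g ?Q (Z \<inter> G) G"
    proof (rule tr[OF sgD z])
      show "\<forall>u\<in>Z \<inter> G. owns g ?Q u \<longrightarrow> (\<forall>w\<in>Z. (u, w) \<in> edges g \<longrightarrow> w \<in> G)" using ZD DG by blast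
      show "\<forall>u\<in>Z \<inter> G. \<not> owns g ?Q u \<longrightarrow> (\<forall>w\<in>G. (u, w) \<in> edges g \<longrightarrow> w \<in> D)"
        using ptD ZD unfolding ptrap_def by blast
    qed
    moreover have "Z \<inter> G = Z" using ZD DG by blast
    ultimately show ?thesis by simp
  qed
  have IND: "\<And>Di. Di \<subseteq> D \<Longrightarrow> dominion g ?Q Di D \<Longrightarrow> attrI g ?Q Di D = Di \<Longrightarrow> card Di \<le> pop div 2 \<Longrightarrow>
      card (D - Di) = n \<Longrightarrow> D \<inter> G3 = {}" for n
  proof (induction n rule: less_induct)
    case (less n Di)
    show ?case
    proof (cases "Di = D")
      case True
      then have "D \<inter> G1 = {}" using a lift less.prems by auto
      then show ?thesis using G3 G2G1 by blast
    next
      case False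
      define K where "K = D - Di"
      have Kne: "K \<noteq> {}" using False less.prems(1) K_def by blast
      have KD: "K \<subseteq> D" by (simp add: K_def)
      have ptK: "ptrap g P K D"
        using compl_attr_ptrap[OF Dv, of P Di] less.prems(3) unfolding K_def by simp
      have sgK: "subgame g K" by (rule ptrap_subgame[OF sgD ptK])
      have KK: "dominion g ?Q K K"
      proof -
        have "dominion g ?Q (D \<inter> K) K"
        proof (rule tr[OF sgD DD])
          show "\<forall>u\<in>D \<inter> K. owns g ?Q u \<longrightarrow> (\<forall>w\<in>D. (u, w) \<in> edges g \<longrightarrow> w \<in> K)"
          proof (intro ballI impI)
            fix u w assume u: "u \<in> D \<inter> K" and o: "owns g ?Q u" and w: "w \<in> D" "(u, w) \<in> edges g"
            have "\<not> owns g P u" using own_opp_in[of u g P] o Dv u by blast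
            then show "w \<in> K" using ptK u w unfolding ptrap_def by blast
          qed
          show "\<forall>u\<in>D \<inter> K. \<not> owns g ?Q u \<longrightarrow> (\<forall>w\<in>K. (u, w) \<in> edges g \<longrightarrow> w \<in> D)" using KD by blast
        qed
        moreover have "D \<inter> K = K" using KD by blast
        ultimately show ?thesis by simp
      qed
      have finK: "finite K" by (rule finite_subset[OF KD finD])
      have prK: "\<forall>v\<in>K. prio g v \<le> d" using pr KD DG by blast
      define NK where "NK = {v\<in>K. prio g v = d}"
      define AK where "AK = attrI g P NK K"
      define M where "M = K - AK"
      obtain R where R: "R \<noteq> {}" "R \<subseteq> K" "R \<inter> AK = {}" "dominion g ?Q R M"
        using key_S[OF sgK finK prK par KK Kne] unfolding AK_def NK_def M_def by auto
      have Kv: "K \<subseteq> verts g" using KD Dv by blast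
      have ptM: "ptrap g ?Q M K" using compl_attr_ptrap[OF Kv, of ?Q NK] unfolding M_def AK_def by simp
      have sgM: "subgame g M" by (rule ptrap_subgame[OF sgK ptM])
      have RD: "R \<subseteq> D" using R(2) KD by blast
      have RM: "R \<subseteq> M" using R(4) by (simp add: dominion_def)
      have RDi: "R \<inter> Di = {}" using R(2) K_def by blast
      have DiR: "dominion g ?Q (Di \<union> R) D"
      proof (rule sw[OF sgD less.prems(2)])
        show "Di \<inter> R = {}" using RDi by blast
        show "R \<subseteq> D" by (rule RD)
        show "\<forall>u\<in>R. \<exists>\<sigma>. strategy g ?Q D \<sigma> \<and> (\<forall>\<rho>. play g D u \<rho> \<and> consistent g ?Q \<sigma> \<rho> \<longrightarrow>
            ((\<forall>i. \<rho> i \<in> R) \<and> wins g ?Q \<rho>) \<or> (\<exists>k. \<rho> k \<in> Di \<and> (\<forall>i<k. \<rho> i \<in> R)))"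
        proof
          fix u assume u: "u \<in> R"
          have c1: "\<forall>u\<in>R \<inter> D. owns g ?Q u \<longrightarrow> (\<forall>w\<in>R. (u, w) \<in> edges g \<longrightarrow> w \<in> D)" using RD by blast
          have c2: "\<forall>u\<in>R \<inter> D. \<not> owns g ?Q u \<longrightarrow> (\<forall>w\<in>D. (u, w) \<in> edges g \<longrightarrow> w \<in> M \<or> w \<in> Di)"
          proof (intro ballI impI)
            fix u w assume u: "u \<in> R \<inter> D" and o: "\<not> owns g ?Q u" and w: "w \<in> D" "(u, w) \<in> edges g"
            show "w \<in> M \<or> w \<in> Di"
            proof (cases "w \<in> Di")
              case False
              then have "w \<in> K" using w K_def by blast
              then have "w \<in> M" using ptM u o w RM unfolding ptrap_def by blast
              then show ?thesis by simp
            qed simp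
          qed
          have "R \<inter> D = R" using RD by blast
          then show "\<exists>\<sigma>. strategy g ?Q D \<sigma> \<and> (\<forall>\<rho>. play g D u \<rho> \<and> consistent g ?Q \<sigma> \<rho> \<longrightarrow>
            ((\<forall>i. \<rho> i \<in> R) \<and> wins g ?Q \<rho>) \<or> (\<exists>k. \<rho> k \<in> Di \<and> (\<forall>i<k. \<rho> i \<in> R)))"
            using tre[OF sgM R(4) c1 c2, of u] u RD by simp
        qed
      qed
      define D' where "D' = attrI g ?Q (Di \<union> R) D"
      have D'dom: "dominion g ?Q D' D" unfolding D'_def by (rule attr_dom[OF sgD DiR])
      have D'D: "D' \<subseteq> D"
      proof
        fix v assume "v \<in> D'" then show "v \<in> D" unfolding D'_def by (rule attrI_sub)
      qed
      have D'idem: "attrI g ?Q D' D = D'" unfolding D'_def by (rule attrI_idem)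
      have sub': "Di \<union> R \<subseteq> D'"
      proof
        fix v assume "v \<in> Di \<union> R"
        then show "v \<in> D'" unfolding D'_def using less.prems(1) RD by (intro attrI.base) auto
      qed
      have lt: "card (D - D') < card (D - Di)"
      proof (rule psubset_card_mono)
        show "finite (D - Di)" using finD by simp
        obtain r where "r \<in> R" using R(1) by blast
        then have "r \<in> D - Di" "r \<notin> D - D'" using RD RDi sub' by auto
        then show "D - D' \<subset> D - Di" using sub' by blast
      qed
      show ?thesis
      proof (cases "card D' \<le> pop div 2")
        case True
        show ?thesis
          by (rule less.IH[OF _ D'D D'dom D'idem True refl]) (use lt less.prems(5) in simp)
      next
        case False
        have DiG1: "Di \<inter> G1 = {}" using a lift less.prems(2,4) by blast
        have RG1dom: "dominion g ?Q (R \<inter> G1) G1"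
        proof (rule tr[OF sgM R(4)])
          show "\<forall>u\<in>R \<inter> G1. owns g ?Q u \<longrightarrow> (\<forall>w\<in>R. (u, w) \<in> edges g \<longrightarrow> w \<in> G1)"
          proof (intro ballI impI)
            fix u w assume u: "u \<in> R \<inter> G1" and o: "owns g ?Q u" and w: "w \<in> R" "(u, w) \<in> edges g"
            have "\<not> owns g P u" using own_opp_in[of u g P] o G1v u by blast
            moreover have "w \<in> G" using w RD DG by blast
            ultimately show "w \<in> G1" using G1 u w unfolding ptrap_def by blast
          qed
          show "\<forall>u\<in>R \<inter> G1. \<not> owns g ?Q u \<longrightarrow> (\<forall>w\<in>G1. (u, w) \<in> edges g \<longrightarrow> w \<in> M)"
          proof (intro ballI impI)
            fix u w assume u: "u \<in> R \<inter> G1" and o: "\<not> owns g ?Q u" and w: "w \<in> G1" "(u, w) \<in> edges g"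
            have "w \<in> D" using ptD u RD w G1G o unfolding ptrap_def by blast
            moreover have "w \<notin> Di" using DiG1 w by blast
            ultimately have "w \<in> K" by (simp add: K_def)
            then show "w \<in> M" using ptM u o w RM unfolding ptrap_def by blast
          qed
        qed
        have RG1NA: "(R \<inter> G1) \<inter> attrI g P {v\<in>G1. prio g v = d} G1 = {}"
        proof -
          have pt: "ptrap g ?Q (R \<inter> G1) G1" by (rule dom_ptrap[OF sgG1 RG1dom])
          have "(R \<inter> G1) \<inter> {v\<in>G1. prio g v = d} = {}"
          proof (rule ccontr)
            assume "\<not> ?thesis"
            then obtain v where v: "v \<in> R" "prio g v = d" by blast
            then have "v \<in> NK" using R(2) by (auto simp add: NK_def)
            then have "v \<in> AK" unfolding AK_def using R(2) v by (intro attrI.base) auto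
            then show False using R(3) v by blast
          qed
          from trap_attr[OF pt this G1v] show ?thesis by simp
        qed
        have RG1H: "R \<inter> G1 \<subseteq> H" using RG1NA H by blast
        have RH: "dominion g ?Q (R \<inter> G1) H"
        proof -
          have "dominion g ?Q ((R \<inter> G1) \<inter> H) H"
          proof (rule tr[OF sgG1 RG1dom])
            show "\<forall>u\<in>R \<inter> G1 \<inter> H. owns g ?Q u \<longrightarrow> (\<forall>w\<in>R \<inter> G1. (u, w) \<in> edges g \<longrightarrow> w \<in> H)" using RG1H by blast
            show "\<forall>u\<in>R \<inter> G1 \<inter> H. \<not> owns g ?Q u \<longrightarrow> (\<forall>w\<in>H. (u, w) \<in> edges g \<longrightarrow> w \<in> G1)" using HG1 by blast
          qed
          moreover have "(R \<inter> G1) \<inter> H = R \<inter> G1" using RG1H by blast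
          ultimately show ?thesis by simp
        qed
        have "card (R \<inter> G1) \<le> card D" using RD finD by (intro card_mono) auto
        then have RW: "R \<inter> G1 \<subseteq> W" using b RH cD by auto
        define T where "T = G2 \<inter> D"
        have ptT: "ptrap g P T D"
          unfolding ptrap_def
        proof (intro conjI ballI impI)
          show "T \<subseteq> D" by (simp add: T_def)
        next
          fix v assume v: "v \<in> T" and o: "owns g P v"
          then obtain w where w: "w \<in> G2" "(v, w) \<in> edges g" using ptG2G unfolding ptrap_def T_def by blast
          have "\<not> owns g ?Q v" using own_opp_in[of v g ?Q] o Dv v by (auto simp: T_def)
          moreover have "w \<in> G" using w ptG2G unfolding ptrap_def by blast
          ultimately have "w \<in> D" using ptD v w unfolding ptrap_def T_def by blast
          then show "\<exists>w\<in>T. (v, w) \<in> edges g" using w T_def by blast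
        next
          fix v w assume v: "v \<in> T" and o: "\<not> owns g P v" and w: "w \<in> D" "(v, w) \<in> edges g"
          have "w \<in> G2" using ptG2G v w o DG unfolding ptrap_def T_def by blast
          then show "w \<in> T" using w T_def by blast
        qed
        have TS: "T \<inter> (Di \<union> R) = {}"
        proof (rule ccontr)
          assume "\<not> ?thesis"
          then obtain v where v: "v \<in> G2" "v \<in> Di \<union> R" unfolding T_def by blast
          then have vG1: "v \<in> G1" using G2G1 by blast
          show False
          proof (cases "v \<in> Di")
            case True then show False using DiG1 vG1 by blast
          next
            case False
            then have "v \<in> W" using v RW vG1 by blast
            then have "v \<in> attrI g ?Q W G1" using vG1 by (intro attrI.base)
            then show False using v G2 by blast
          qed
        qed
        have "T \<inter> attrI g (opp P) (Di \<union> R) D = {}" by (rule trap_attr[OF ptT TS Dv])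
        then have G2D': "G2 \<inter> D' = {}" using D'D unfolding T_def D'_def by blast
        have finD': "finite D'" by (rule finite_subset[OF D'D finD])
        have "card (D \<inter> G2) \<le> card (D - D')"
          using G2D' finD by (intro card_mono) auto
        also have "\<dots> = card D - card D'" using D'D finD' by (simp add: card_Diff_subset)
        also have "\<dots> \<le> pop div 2" using False cD by linarith
        finally have cG2: "card (D \<inter> G2) \<le> pop div 2" .
        have "dominion g ?Q (D \<inter> G2) G2"
        proof (rule tr[OF sg D])
          show "\<forall>u\<in>D \<inter> G2. owns g ?Q u \<longrightarrow> (\<forall>w\<in>D. (u, w) \<in> edges g \<longrightarrow> w \<in> G2)"
          proof (intro ballI impI)
            fix u w assume u: "u \<in> D \<inter> G2" and o: "owns g ?Q u" and w: "w \<in> D" "(u, w) \<in> edges g"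
            have "\<not> owns g P u" using own_opp_in[of u g P] o Dv u by blast
            then show "w \<in> G2" using ptG2G u w DG unfolding ptrap_def by blast
          qed
          show "\<forall>u\<in>D \<inter> G2. \<not> owns g ?Q u \<longrightarrow> (\<forall>w\<in>G2. (u, w) \<in> edges g \<longrightarrow> w \<in> G)"
            using G2G1 G1G by blast
        qed
        then have "(D \<inter> G2) \<inter> G3 = {}" using c cG2 by blast
        then show ?thesis using G3 by blast
      qed
    qed
  qed
  show ?thesis
    by (rule IND[OF _ dom_empty attrI_empty[OF sgD]]) simp_all
qed

lemma par_lemma:
  assumes "P = (if even d then Even else Odd)"
  shows "\<forall>\<rho>. inf_max_prio g \<rho> = d \<longrightarrow> \<not> wins g (opp P) \<rho>"
  using assms by (auto simp: wins_def)

lemma small_dom_empty: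
  assumes pg: "parity_game g" and sg: "subgame g G" and d: "dominion g Pl D G" and c: "card D \<le> 1"
  shows "D = {}"
proof (rule ccontr)
  assume ne: "D \<noteq> {}"
  have Gv: "G \<subseteq> verts g" using sg by (simp add: subgame_def)
  have finV: "finite (verts g)" using pg by (simp add: parity_game_def)
  have DG: "D \<subseteq> G" using d by (simp add: dominion_def)
  have finD: "finite D" by (rule finite_subset[OF _ finV]) (use DG Gv in blast)
  have "card D = 1" using c ne finD by (simp add: card_gt_0_iff le_antisym Suc_le_eq)
  then obtain x where Dx: "D = {x}" using card_1_singletonE by blast
  have pt: "ptrap g Pl D G" by (rule dom_ptrap[OF sg d])
  have xG: "x \<in> G" using DG Dx by blast
  have "(x, x) \<in> edges g"
  proof (cases "owns g Pl x")
    case True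
    then show ?thesis using pt Dx unfolding ptrap_def by blast
  next
    case False
    obtain w where "w \<in> G" "(x, w) \<in> edges g" using subgame_succ[OF sg xG] by blast
    then show ?thesis using pt Dx False unfolding ptrap_def by blast
  qed
  then show False using pg by (simp add: parity_game_def)
qed

declare solve.simps[simp del]

lemma main:
  "parity_game g \<Longrightarrow> subgame g G \<Longrightarrow> (\<forall>v\<in>G. prio g v \<le> d) \<Longrightarrow> P = (if even d then Even else Odd) \<Longrightarrow>
    solve g P G d pme pop \<subseteq> G \<and> ptrap g P (solve g P G d pme pop) G \<and>
    (\<forall>D. dominion g P D G \<and> card D \<le> pme \<longrightarrow> D \<subseteq> solve g P G d pme pop) \<and>
    (\<forall>D. dominion g (opp P) D G \<and> card D \<le> pop \<longrightarrow> D \<inter> solve g P G d pme pop = {})"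
proof (induction g P G d pme pop rule: solve.induct)
  case (1 g P G d pme pop)
  note pg = "1.prems"(1) and sg = "1.prems"(2) and pr = "1.prems"(3) and Pd = "1.prems"(4)
  have Gv: "G \<subseteq> verts g" using sg by (simp add: subgame_def)
  show ?case
  proof (cases "G = {} \<or> pop \<le> 1 \<or> d = 0")
    case True
    then have sol: "solve g P G d pme pop = G" by (subst solve.simps) simp
    have iii: "D \<inter> G = {}" if D: "dominion g (opp P) D G" "card D \<le> pop" for D
    proof -
      have DG: "D \<subseteq> G" using D by (simp add: dominion_def)
      show ?thesis
      proof (cases "pop \<le> 1")
        case True
        then have "D = {}" using small_dom_empty[OF pg sg D(1)] D(2) by simp
        then show ?thesis by simp
      next
        case False
        have "G = {}"
        proof (cases "G = {}")
          case False': False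
          then have "d = 0" using True False by simp
          moreover obtain v where "v \<in> G" using False' by blast
          moreover have "1 \<le> prio g v" using pg Gv \<open>v \<in> G\<close> by (auto simp: parity_game_def)
          ultimately show ?thesis using pr by fastforce
        qed simp
        then show ?thesis using DG by blast
      qed
    qed
    have ii: "\<forall>D. dominion g P D G \<and> card D \<le> pme \<longrightarrow> D \<subseteq> G" by (simp add: dominion_def)
    show ?thesis unfolding sol using ptrap_self[OF sg] iii ii by blast
  next
    case False
    define G1 where "G1 = solve g P G d pme (pop div 2)"
    define Nd where "Nd = {v \<in> G1. prio g v = d}"
    define H where "H = G1 - attr g P Nd G1"
    define W where "W = solve g (opp P) H (d - 1) pop pme"
    define G2 where "G2 = G1 - attr g (opp P) W G1"
    define G3 where "G3 = solve g P G2 d pme (pop div 2)"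
    have sol: "solve g P G d pme pop = G3"
      using False unfolding G3_def G2_def W_def H_def Nd_def G1_def by (subst solve.simps) (simp only: Let_def if_False)
    have IH1: "G1 \<subseteq> G \<and> ptrap g P G1 G \<and>
      (\<forall>D. dominion g P D G \<and> card D \<le> pme \<longrightarrow> D \<subseteq> G1) \<and>
      (\<forall>D. dominion g (opp P) D G \<and> card D \<le> pop div 2 \<longrightarrow> D \<inter> G1 = {})"
      using "1.IH"(1)[OF False pg sg pr Pd] unfolding G1_def .
    have sgG1: "subgame g G1" using ptrap_subgame[OF sg] IH1 by blast
    have G1v: "G1 \<subseteq> verts g" using sgG1 by (simp add: subgame_def)
    have Heq: "H = G1 - attrI g P Nd G1" unfolding H_def attr_eq[OF sgG1] ..
    have Heq': "H = G1 - attrI g P {v\<in>G1. prio g v = d} G1" using Heq unfolding Nd_def .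
    have ptH: "ptrap g (opp P) H G1" using compl_attr_ptrap[OF G1v, of "opp P" Nd] unfolding Heq by simp
    have sgH: "subgame g H" by (rule ptrap_subgame[OF sgG1 ptH])
    have HG1: "H \<subseteq> G1" unfolding Heq by blast
    have d1: "d \<ge> 1" using False by simp
    have prH: "\<forall>v\<in>H. prio g v \<le> d - 1"
    proof
      fix v assume v: "v \<in> H"
      then have "v \<in> G1" "v \<notin> attrI g P Nd G1" unfolding Heq by auto
      then have "prio g v \<noteq> d" using attrI.base[of v Nd G1 g P] unfolding Nd_def by auto
      moreover have "prio g v \<le> d" using pr IH1 \<open>v \<in> G1\<close> by blast
      ultimately show "prio g v \<le> d - 1" by simp
    qed
    have Pd': "opp P = (if even (d - 1) then Even else Odd)" using Pd d1 by (cases "even d") auto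
    have IH2: "W \<subseteq> H \<and> ptrap g (opp P) W H \<and>
      (\<forall>D. dominion g (opp P) D H \<and> card D \<le> pop \<longrightarrow> D \<subseteq> W) \<and>
      (\<forall>D. dominion g (opp (opp P)) D H \<and> card D \<le> pme \<longrightarrow> D \<inter> W = {})"
      using "1.IH"(2)[OF False G1_def Nd_def H_def pg sgH prH Pd'] unfolding W_def .
    have G2eq: "G2 = G1 - attrI g (opp P) W G1" unfolding G2_def attr_eq[OF sgG1] ..
    have ptG2: "ptrap g P G2 G1" using compl_attr_ptrap[OF G1v, of P W] unfolding G2eq by simp
    have sgG2: "subgame g G2" by (rule ptrap_subgame[OF sgG1 ptG2])
    have G2G1: "G2 \<subseteq> G1" unfolding G2eq by blast
    have prG2: "\<forall>v\<in>G2. prio g v \<le> d" using pr IH1 G2G1 by blast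
    have IH3: "G3 \<subseteq> G2 \<and> ptrap g P G3 G2 \<and>
      (\<forall>D. dominion g P D G2 \<and> card D \<le> pme \<longrightarrow> D \<subseteq> G3) \<and>
      (\<forall>D. dominion g (opp P) D G2 \<and> card D \<le> pop div 2 \<longrightarrow> D \<inter> G3 = {})"
      using "1.IH"(3)[OF False G1_def Nd_def H_def W_def G2_def pg sgG2 prG2 Pd] unfolding G3_def .
    have G3G2: "G3 \<subseteq> G2" using IH3 by (rule conjunct1)
    have G1G: "G1 \<subseteq> G" using IH1 by (rule conjunct1)
    have i1: "G3 \<subseteq> G" using G3G2 G2G1 G1G by (rule subset_trans[OF subset_trans])
    have i2: "ptrap g P G3 G"
      by (rule ptrap_trans[OF IH3[THEN conjunct2, THEN conjunct1] ptrap_trans[OF ptG2 IH1[THEN conjunct2, THEN conjunct1]]])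
    have ii: "D \<subseteq> G3" if D: "dominion g P D G" "card D \<le> pme" for D
    proof -
      have DG1: "D \<subseteq> G1" using IH1 D by blast
      have DG1dom: "dominion g P D G1"
      proof -
        have "dominion g P (D \<inter> G1) G1"
        proof (rule tr[OF sg D(1)])
          show "\<forall>u\<in>D \<inter> G1. owns g P u \<longrightarrow> (\<forall>w\<in>D. (u, w) \<in> edges g \<longrightarrow> w \<in> G1)" using DG1 by blast
          show "\<forall>u\<in>D \<inter> G1. \<not> owns g P u \<longrightarrow> (\<forall>w\<in>G1. (u, w) \<in> edges g \<longrightarrow> w \<in> G)" using IH1 by blast
        qed
        moreover have "D \<inter> G1 = D" using DG1 by blast
        ultimately show ?thesis by simp
      qed
      have DH: "dominion g P (D \<inter> H) H"
      proof (rule tr[OF sgG1 DG1dom])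
        show "\<forall>u\<in>D \<inter> H. owns g P u \<longrightarrow> (\<forall>w\<in>D. (u, w) \<in> edges g \<longrightarrow> w \<in> H)"
        proof (intro ballI impI)
          fix u w assume u: "u \<in> D \<inter> H" and o: "owns g P u" and w: "w \<in> D" "(u, w) \<in> edges g"
          have "\<not> owns g (opp P) u" using own_opp_in[of u g "opp P"] o G1v u HG1 by auto
          then show "w \<in> H" using ptH u w DG1 unfolding ptrap_def by blast
        qed
        show "\<forall>u\<in>D \<inter> H. \<not> owns g P u \<longrightarrow> (\<forall>w\<in>H. (u, w) \<in> edges g \<longrightarrow> w \<in> G1)" using HG1 by blast
      qed
      have finD: "finite D" by (rule finite_subset[OF _ finite_subset[OF Gv]]) (use D pg in \<open>auto simp: dominion_def parity_game_def\<close>)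
      have "card (D \<inter> H) \<le> pme" using D(2) finD card_mono[of D "D \<inter> H"] by auto
      then have "(D \<inter> H) \<inter> W = {}" using IH2 DH by simp
      then have DW: "D \<inter> W = {}" using IH2 by blast
      have ptD: "ptrap g P D G1" by (rule dom_ptrap[OF sgG1 DG1dom])
      have "D \<inter> attrI g (opp P) W G1 = {}" by (rule trap_attr[OF ptD DW G1v])
      then have DG2: "D \<subseteq> G2" unfolding G2eq using DG1 by blast
      have "dominion g P D G2"
      proof -
        have "dominion g P (D \<inter> G2) G2"
        proof (rule tr[OF sgG1 DG1dom])
          show "\<forall>u\<in>D \<inter> G2. owns g P u \<longrightarrow> (\<forall>w\<in>D. (u, w) \<in> edges g \<longrightarrow> w \<in> G2)" using DG2 by blast
          show "\<forall>u\<in>D \<inter> G2. \<not> owns g P u \<longrightarrow> (\<forall>w\<in>G2. (u, w) \<in> edges g \<longrightarrow> w \<in> G1)" using G2G1 by blast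
        qed
        moreover have "D \<inter> G2 = D" using DG2 by blast
        ultimately show ?thesis by simp
      qed
      then show ?thesis using IH3 D(2) by blast
    qed
    have iii: "D \<inter> G3 = {}" if D: "dominion g (opp P) D G" "card D \<le> pop" for D
    proof (rule step_iii[OF pg sg pr par_lemma[OF Pd] _ Heq' _ G2eq _ _ _ _ D])
      show "ptrap g P G1 G" using IH1 by blast
      show "W \<subseteq> H" using IH2 by blast
      show "G3 \<subseteq> G2" using IH3 by blast
      show "\<forall>Z. dominion g (opp P) Z G \<and> card Z \<le> pop div 2 \<longrightarrow> Z \<inter> G1 = {}" using IH1 by blast
      show "\<forall>Z. dominion g (opp P) Z H \<and> card Z \<le> pop \<longrightarrow> Z \<subseteq> W" using IH2 by blast
      show "\<forall>Z. dominion g (opp P) Z G2 \<and> card Z \<le> pop div 2 \<longrightarrow> Z \<inter> G3 = {}" using IH3 by blast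
    qed
    show ?thesis unfolding sol using i1 i2 ii iii by blast
  qed
qed

theorem lemma3p2:
  fixes g :: "'v pgame" and G :: "'v set" and d pE pO :: nat
  assumes "parity_game g"
    and "subgame g G"
    and "1 \<le> pE" and "1 \<le> pO"
    and "\<forall>v\<in>G. prio g v \<le> d"
  shows "(even d \<longrightarrow>
            closed g Even (Solve_E g G d pE pO) G \<and>
            (\<forall>D. dominion g Even D G \<and> card D \<le> pE \<longrightarrow> D \<subseteq> Solve_E g G d pE pO) \<and>
            (\<forall>D. dominion g Odd D G \<and> card D \<le> pO \<longrightarrow> D \<inter> Solve_E g G d pE pO = {}))
       \<and> (odd d \<longrightarrow>
            closed g Odd (Solve_O g G d pO pE) G \<and>
            (\<forall>D. dominion g Odd D G \<and> card D \<le> pO \<longrightarrow> D \<subseteq> Solve_O g G d pO pE) \<and>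
            (\<forall>D. dominion g Even D G \<and> card D \<le> pE \<longrightarrow> D \<inter> Solve_O g G d pO pE = {}))"
proof (intro conjI impI)
  assume e: "even d"
  have m: "solve g Even G d pE pO \<subseteq> G \<and> ptrap g Even (solve g Even G d pE pO) G \<and>
    (\<forall>D. dominion g Even D G \<and> card D \<le> pE \<longrightarrow> D \<subseteq> solve g Even G d pE pO) \<and>
    (\<forall>D. dominion g (opp Even) D G \<and> card D \<le> pO \<longrightarrow> D \<inter> solve g Even G d pE pO = {})"
    by (rule main) (use assms e in auto)
  show "closed g Even (Solve_E g G d pE pO) G" unfolding Solve_E_def using ptrap_closed[OF assms(2)] m by blast
  show "\<forall>D. dominion g Even D G \<and> card D \<le> pE \<longrightarrow> D \<subseteq> Solve_E g G d pE pO" unfolding Solve_E_def using m by blast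
  show "\<forall>D. dominion g Odd D G \<and> card D \<le> pO \<longrightarrow> D \<inter> Solve_E g G d pE pO = {}" unfolding Solve_E_def using m by simp
next
  assume o: "odd d"
  have m: "solve g Odd G d pO pE \<subseteq> G \<and> ptrap g Odd (solve g Odd G d pO pE) G \<and>
    (\<forall>D. dominion g Odd D G \<and> card D \<le> pO \<longrightarrow> D \<subseteq> solve g Odd G d pO pE) \<and>
    (\<forall>D. dominion g (opp Odd) D G \<and> card D \<le> pE \<longrightarrow> D \<inter> solve g Odd G d pO pE = {})"
    by (rule main) (use assms o in auto)
  show "closed g Odd (Solve_O g G d pO pE) G" unfolding Solve_O_def using ptrap_closed[OF assms(2)] m by blast
  show "\<forall>D. dominion g Odd D G \<and> card D \<le> pO \<longrightarrow> D \<subseteq> Solve_O g G d pO pE" unfolding Solve_O_def using m by blast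
  show "\<forall>D. dominion g Even D G \<and> card D \<le> pE \<longrightarrow> D \<inter> Solve_O g G d pO pE = {}" unfolding Solve_O_def using m by simp
qed

end
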